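(* Let $n\in\mathbb N$, $T_1,\dots,T_n\in B(\mathcal H)$, $\varphi(X):=\sum_{i=1}^nT_iXT_i^*$ and $\varphi^*(X):=\sum_{i=1}^nT_i^*XT_i$. Let $D\in B(\mathcal H)$ be positive with $\varphi(D)\le D$. Then the limit $$\operatorname{curv}_*(\varphi,D):=\lim_{k\to\infty}\frac{\operatorname{trace}[K_{\varphi,D}^*(P_{\le k}\otimes I)K_{\varphi,D}]}{1+\|\varphi^*(I)\|+\cdots+\|\varphi^*(I)\|^k}$$ exists (in $[0,\infty]$). Moreover, $\operatorname{curv}_*(\varphi,D)<\infty$ if and only if $\operatorname{trace}(D-\varphi(D))<\infty$.
   Context: $F^2(H_n)=\bigoplus_{k\ge0}H_n^{\otimes k}$ is the full Fock space of $H_n$ with orthonormal basis $e_1,\dots,e_n$; for a word $\alpha=g_{i_1}\cdots g_{i_k}$ in the free semigroup $\mathbb F_n^+$, $|\alpha|=k$, $e_\alpha=e_{i_1}\otimes\cdots\otimes e_{i_k}$, $T_\alpha=T_{i_1}\cdots T_{i_k}$ (empty word: $e=1$, $T=I$). The Poisson kernel $K_{\varphi,D}:\mathcal H\to F^2(H_n)\otimes\mathcal H$ is $K_{\varphi,D}h:=\sum_{\alpha\in\mathbb F_n^+}e_\alpha\otimes\Delta T_\alpha^*h$ with $\Delta:=(D-\varphi(D))^{1/2}$. $P_{\le k}$ is the orthogonal projection of $F^2(H_n)$ onto the span of $\{e_\alpha:|\alpha|\le k\}$. *)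

theory Defs
  imports "HOL-Analysis.Analysis"
begin

definition orthonormal_basis :: "'a::real_inner set \<Rightarrow> bool" where
  "orthonormal_basis B \<longleftrightarrow>
     (\<forall>e\<in>B. norm e = 1) \<and> (\<forall>e\<in>B. \<forall>f\<in>B. e \<noteq> f \<longrightarrow> inner e f = 0) \<and>
     closure (span B) = UNIV"

definition some_onb :: "'a::real_inner set" where
  "some_onb = (SOME B. orthonormal_basis B)"

definition positive_op :: "('a::real_inner \<Rightarrow> 'a) \<Rightarrow> bool" where
  "positive_op A \<longleftrightarrow> bounded_linear A \<and> (\<forall>x y. inner (A x) y = inner x (A y)) \<and>
     (\<forall>x. 0 \<le> inner (A x) x)"

definition pos_trace :: "('a::real_inner \<Rightarrow> 'a) \<Rightarrow> ennreal" where
  "pos_trace A = (\<Sum>\<^sub>\<infinity>e\<in>some_onb. ennreal (inner (A e) e))"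

definition op_sqrt :: "('a::real_inner \<Rightarrow> 'a) \<Rightarrow> ('a \<Rightarrow> 'a)" where
  "op_sqrt A = (THE S. positive_op S \<and> S \<circ> S = A)"

definition phi :: "(nat \<Rightarrow> 'a::real_inner \<Rightarrow> 'a) \<Rightarrow> nat \<Rightarrow> ('a \<Rightarrow> 'a) \<Rightarrow> ('a \<Rightarrow> 'a)" where
  "phi T n X = (\<lambda>x. \<Sum>i<n. T i (X (adjoint (T i) x)))"

definition phi_star :: "(nat \<Rightarrow> 'a::real_inner \<Rightarrow> 'a) \<Rightarrow> nat \<Rightarrow> ('a \<Rightarrow> 'a) \<Rightarrow> ('a \<Rightarrow> 'a)" where
  "phi_star T n X = (\<lambda>x. \<Sum>i<n. adjoint (T i) (X (T i x)))"

text \<open>Free semigroup on generators g_0..g_(n-1): words are lists over {..<n}.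
  Word [i1,...,ik] corresponds to g_i1 ... g_ik, |alpha| = length.\<close>
definition words :: "nat \<Rightarrow> nat list set" where
  "words n = {\<alpha>. set \<alpha> \<subseteq> {..<n}}"

definition T_word :: "(nat \<Rightarrow> 'a \<Rightarrow> 'a) \<Rightarrow> nat list \<Rightarrow> ('a \<Rightarrow> 'a)" where
  "T_word T \<alpha> = foldr (\<lambda>i S. T i \<circ> S) \<alpha> id"

text \<open>F^2(H_n) \<otimes> H is modelled as l^2(F_n^+; H): e_alpha \<otimes> h is the function
  that is h at alpha and 0 elsewhere.  Inner product:\<close>
definition fock_inner :: "nat \<Rightarrow> (nat list \<Rightarrow> 'a::real_inner) \<Rightarrow> (nat list \<Rightarrow> 'a) \<Rightarrow> real" where
  "fock_inner n f g = (\<Sum>\<^sub>\<infinity>\<alpha>\<in>words n. inner (f \<alpha>) (g \<alpha>))"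

text \<open>Poisson kernel K_{phi,D} h = sum_alpha e_alpha \<otimes> Delta T_alpha^* h.\<close>
definition poisson_kernel ::
  "(nat \<Rightarrow> 'a::real_inner \<Rightarrow> 'a) \<Rightarrow> nat \<Rightarrow> ('a \<Rightarrow> 'a) \<Rightarrow> 'a \<Rightarrow> (nat list \<Rightarrow> 'a)" where
  "poisson_kernel T n D h =
     (\<lambda>\<alpha>. if \<alpha> \<in> words n then op_sqrt (D - phi T n D) (adjoint (T_word T \<alpha>) h) else 0)"

definition proj_le :: "nat \<Rightarrow> (nat list \<Rightarrow> 'a::real_inner) \<Rightarrow> (nat list \<Rightarrow> 'a)" where
  "proj_le k F = (\<lambda>\<alpha>. if length \<alpha> \<le> k then F \<alpha> else 0)"

text \<open>trace[K^*(P_{\<le>k}\<otimes>I)K] = sum over an ONB e of <K^*(P\<otimes>I)K e, e>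
  = sum over e of <(P\<otimes>I) K e, K e> (the adjoint K^* unfolded by its defining identity).\<close>
definition curv_num :: "(nat \<Rightarrow> 'a::real_inner \<Rightarrow> 'a) \<Rightarrow> nat \<Rightarrow> ('a \<Rightarrow> 'a) \<Rightarrow> nat \<Rightarrow> ennreal" where
  "curv_num T n D k = (\<Sum>\<^sub>\<infinity>e\<in>some_onb.
      ennreal (fock_inner n (proj_le k (poisson_kernel T n D e)) (poisson_kernel T n D e)))"

definition curv_ratio :: "(nat \<Rightarrow> 'a::real_inner \<Rightarrow> 'a) \<Rightarrow> nat \<Rightarrow> ('a \<Rightarrow> 'a) \<Rightarrow> nat \<Rightarrow> ennreal" where
  "curv_ratio T n D k = curv_num T n D k / ennreal (\<Sum>j\<le>k. onorm (phi_star T n id) ^ j)"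

definition curv_star :: "(nat \<Rightarrow> 'a::real_inner \<Rightarrow> 'a) \<Rightarrow> nat \<Rightarrow> ('a \<Rightarrow> 'a) \<Rightarrow> ennreal" where
  "curv_star T n D = lim (curv_ratio T n D)"

end

theory Submission
  imports Defs "HOL-Computational_Algebra.Formal_Power_Series"
begin


section \<open>Hilbert space basics\<close>

lemma parallelogram:
  fixes u v :: "'a::real_inner"
  shows "(norm (u + v))\<^sup>2 + (norm (u - v))\<^sup>2 = 2 * (norm u)\<^sup>2 + 2 * (norm v)\<^sup>2"
  by (simp add: power2_norm_eq_inner inner_add_left inner_add_right inner_diff_left inner_diff_right inner_commute)

lemma quad_nonneg_zero:
  fixes c a :: real
  assumes "\<And>t. 2 * t * c \<le> t\<^sup>2 * a" "0 \<le> a"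
  shows "c = 0"
proof -
  have s: "0 < a + 1" using assms(2) by simp
  have "(a+1)\<^sup>2 * (2 * (c / (a + 1)) * c) \<le> (a+1)\<^sup>2 * ((c / (a + 1))\<^sup>2 * a)"
    using assms(1) by (rule mult_left_mono) simp
  also have "(a+1)\<^sup>2 * ((c / (a + 1))\<^sup>2 * a) = ((a+1) * (c / (a + 1)))\<^sup>2 * a"
    by (simp only: power_mult_distrib mult.assoc)
  also have "(a+1) * (c / (a + 1)) = c" using s by simp
  also have "(a+1)\<^sup>2 * (2 * (c / (a + 1)) * c) = 2 * c * c * ((a+1) * ((a + 1) * (1 / (a+1))))"
    by (simp add: power2_eq_square)
  also have "(a + 1) * (1 / (a+1)) = 1" using s by simp
  finally have "c * c * (a + 2) \<le> 0" by (simp add: algebra_simps power2_eq_square)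
  moreover have "0 \<le> c * c * (a + 2)" using assms(2) by simp
  ultimately have "c * c * (a + 2) = 0" by linarith
  hence "c * c = 0" using assms(2) by simp
  thus ?thesis by simp
qed

lemma subspace_closure_gen:
  fixes S :: "'a::real_normed_vector set"
  assumes "subspace S"
  shows "subspace (closure S)"
  unfolding subspace_def
proof (intro conjI ballI allI)
  show "0 \<in> closure S" using assms closure_subset subspace_0 by blast
next
  fix x y assume x: "x \<in> closure S" and y: "y \<in> closure S"
  from x obtain f where f: "\<And>n. f n \<in> S" "f \<longlonglongrightarrow> x" unfolding closure_sequential by blast
  from y obtain g where g: "\<And>n. g n \<in> S" "g \<longlonglongrightarrow> y" unfolding closure_sequential by blast
  have "(\<lambda>n. f n + g n) \<longlonglongrightarrow> x + y" using f g by (intro tendsto_add) auto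
  moreover have "\<And>n. f n + g n \<in> S" using f g assms subspace_add by blast
  ultimately show "x + y \<in> closure S" unfolding closure_sequential
    by (intro exI[where x="\<lambda>n. f n + g n"]) auto
next
  fix c :: real and x assume x: "x \<in> closure S"
  from x obtain f where f: "\<And>n. f n \<in> S" "f \<longlonglongrightarrow> x" unfolding closure_sequential by blast
  have "(\<lambda>n. c *\<^sub>R f n) \<longlonglongrightarrow> c *\<^sub>R x" using f by (intro tendsto_scaleR) auto
  moreover have "\<And>n. c *\<^sub>R f n \<in> S" using f assms subspace_scale by blast
  ultimately show "c *\<^sub>R x \<in> closure S" unfolding closure_sequential
    by (intro exI[where x="\<lambda>n. c *\<^sub>R f n"]) auto
qed

lemma proj_exists:
  fixes M :: "'h::{real_inner,complete_space} set"
  assumes sub: "subspace M" and cl: "closed M"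
  shows "\<exists>p\<in>M. \<forall>m\<in>M. inner (x - p) m = 0"
proof -
  have ne: "M \<noteq> {}" using sub subspace_0 by blast
  define d where "d = infdist x M"
  have d0: "0 \<le> d" unfolding d_def by (rule infdist_nonneg)
  have dle: "d \<le> norm (x - m)" if "m \<in> M" for m
    unfolding d_def using infdist_le[OF that, of x] by (simp add: dist_norm)
  have "\<forall>k. \<exists>v. v \<in> M \<and> norm (x - v) < d + 1 / real (Suc k)"
  proof
    fix k
    have "Inf ((\<lambda>a. dist x a) ` M) < d + 1 / real (Suc k)"
      unfolding d_def infdist_notempty[OF ne] by simp
    moreover have "(\<lambda>a. dist x a) ` M \<noteq> {}" using ne by simp
    ultimately obtain v where "v \<in> (\<lambda>a. dist x a) ` M" "v < d + 1 / real (Suc k)"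
      using cInf_lessD by metis
    thus "\<exists>v. v \<in> M \<and> norm (x - v) < d + 1 / real (Suc k)" by (auto simp: dist_norm)
  qed
  from choice[OF this] obtain m where m0: "\<forall>k. m k \<in> M \<and> norm (x - m k) < d + 1 / real (Suc k)"
    by blast
  hence m: "\<And>k. m k \<in> M" "\<And>k. norm (x - m k) < d + 1 / real (Suc k)" by auto
  define \<delta> where "\<delta> k = (d + 1 / real (Suc k))\<^sup>2 - d\<^sup>2" for k
  have \<delta>b: "\<delta> k \<le> (2 * d + 1) / real (Suc k)" for k
  proof -
    have "\<delta> k = 2 * d / real (Suc k) + 1 / (real (Suc k))\<^sup>2"
      unfolding \<delta>_def power2_sum by (simp add: power_divide)
    also have "1 / (real (Suc k))\<^sup>2 \<le> 1 / real (Suc k)"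
    proof (rule divide_left_mono)
      have "real (Suc k) * 1 \<le> real (Suc k) * real (Suc k)" by (intro mult_left_mono) auto
      thus "real (Suc k) \<le> (real (Suc k))\<^sup>2" by (simp add: power2_eq_square)
    qed auto
    finally show ?thesis by (simp add: add_divide_distrib)
  qed
  have sq: "(norm (x - m k))\<^sup>2 \<le> d\<^sup>2 + \<delta> k" for k
  proof -
    have "(norm (x - m k))\<^sup>2 \<le> (d + 1 / real (Suc k))\<^sup>2"
      using m(2)[of k] by (intro power_mono) auto
    thus ?thesis unfolding \<delta>_def by simp
  qed
  have key: "(norm (m a - m b))\<^sup>2 \<le> 2 * \<delta> a + 2 * \<delta> b" for a b
  proof -
    have mid: "(1/2) *\<^sub>R (m a + m b) \<in> M" using m(1) sub by (simp add: subspace_add subspace_scale)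
    have "(norm ((x - m a) + (x - m b)))\<^sup>2 = 4 * (norm (x - (1/2) *\<^sub>R (m a + m b)))\<^sup>2"
    proof -
      have "(x - m a) + (x - m b) = 2 *\<^sub>R (x - (1/2) *\<^sub>R (m a + m b))"
        by (simp add: algebra_simps scaleR_2)
      hence "norm ((x - m a) + (x - m b)) = 2 * norm (x - (1/2) *\<^sub>R (m a + m b))" by simp
      thus ?thesis by (simp add: power2_eq_square)
    qed
    moreover have "d\<^sup>2 \<le> (norm (x - (1/2) *\<^sub>R (m a + m b)))\<^sup>2"
      using dle[OF mid] d0 by (intro power_mono) auto
    moreover have "(norm (m a - m b))\<^sup>2 = (norm ((x - m a) - (x - m b)))\<^sup>2"
      by (simp add: norm_minus_commute)
    ultimately show ?thesis using parallelogram[of "x - m a" "x - m b"] sq[of a] sq[of b] by linarith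
  qed
  have "Cauchy m"
  proof (rule metric_CauchyI)
    fix e :: real assume e: "0 < e"
    obtain N :: nat where N: "real N > 4 * (2 * d + 1) / e\<^sup>2" using reals_Archimedean2 by blast
    show "\<exists>M. \<forall>a\<ge>M. \<forall>b\<ge>M. dist (m a) (m b) < e"
    proof (intro exI allI impI)
      fix a b assume a: "N \<le> a" and b: "N \<le> b"
      have ep: "0 < e\<^sup>2" using e by simp
      have "\<delta> k < e\<^sup>2 / 4" if "N \<le> k" for k
      proof -
        have "4 * (2 * d + 1) / e\<^sup>2 < real (Suc k)" using N that by linarith
        hence "4 * (2 * d + 1) < e\<^sup>2 * real (Suc k)" using ep by (simp add: field_simps)
        hence "(2 * d + 1) / real (Suc k) < e\<^sup>2 / 4" by (simp add: field_simps)
        thus ?thesis using \<delta>b[of k] by linarith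
      qed
      hence "\<delta> a < e\<^sup>2 / 4" "\<delta> b < e\<^sup>2 / 4" using a b by auto
      hence "(norm (m a - m b))\<^sup>2 < e\<^sup>2" using key[of a b] by linarith
      hence "norm (m a - m b) < e" using e by (simp add: power_less_imp_less_base)
      thus "dist (m a) (m b) < e" by (simp add: dist_norm)
    qed
  qed
  then obtain p where p: "m \<longlonglongrightarrow> p" using complete_UNIV unfolding complete_def by blast
  have pM: "p \<in> M" using cl p m(1) closed_sequentially by blast
  have "(\<lambda>k. norm (x - m k)) \<longlonglongrightarrow> norm (x - p)" using p by (intro tendsto_intros)
  moreover have "(\<lambda>k. d + 1 / real (Suc k)) \<longlonglongrightarrow> d + 0"
    by (intro tendsto_intros LIMSEQ_inverse_real_of_nat[unfolded inverse_eq_divide])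
  ultimately have "norm (x - p) \<le> d + 0"
    using m(2) by (intro LIMSEQ_le[of "\<lambda>k. norm (x - m k)" _ "\<lambda>k. d + 1 / real (Suc k)"]) (auto intro: less_imp_le)
  hence best: "norm (x - p) \<le> norm (x - q)" if "q \<in> M" for q using dle[OF that] by simp
  show ?thesis
  proof (intro bexI[OF _ pM] ballI)
    fix v assume v: "v \<in> M"
    show "inner (x - p) v = 0"
    proof (rule quad_nonneg_zero)
      fix t :: real
      have "p + t *\<^sub>R v \<in> M" using sub pM v by (simp add: subspace_add subspace_scale)
      hence "(norm (x - p))\<^sup>2 \<le> (norm (x - (p + t *\<^sub>R v)))\<^sup>2"
        using best by (intro power_mono) auto
      also have "(norm (x - (p + t *\<^sub>R v)))\<^sup>2 = (norm (x - p))\<^sup>2 - 2 * t * inner (x - p) v + t\<^sup>2 * (norm v)\<^sup>2"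
        unfolding power2_norm_eq_inner
        by (simp add: inner_diff_left inner_diff_right inner_add_left inner_add_right
            inner_commute algebra_simps power2_eq_square)
      finally show "2 * t * inner (x - p) v \<le> t\<^sup>2 * (norm v)\<^sup>2" by simp
    qed simp
  qed
qed

lemma riesz:
  fixes f :: "'h::{real_inner,complete_space} \<Rightarrow> real"
  assumes bl: "bounded_linear f"
  shows "\<exists>z. \<forall>x. f x = inner x z"
proof (cases "\<forall>x. f x = 0")
  case True thus ?thesis by (intro exI[of _ 0]) simp
next
  case False
  then obtain x0 where x0: "f x0 \<noteq> 0" by blast
  interpret bounded_linear f by fact
  let ?K = "{x. f x = 0}"
  have subK: "subspace ?K" unfolding subspace_def by (auto simp: add scale)
  have "continuous_on UNIV f" using linear_continuous_on[OF bl] .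
  hence clK: "closed ?K" using closed_Collect_eq[OF _ continuous_on_const] by blast
  obtain p where p: "f p = 0" "\<And>m. f m = 0 \<Longrightarrow> inner (x0 - p) m = 0"
    using proj_exists[OF subK clK, of x0] by auto
  define w where "w = x0 - p"
  have fw: "f w = f x0" unfolding w_def using p by (simp add: diff)
  have w0: "w \<noteq> 0" using fw x0 by auto
  have "f x = inner x ((f w / (norm w)\<^sup>2) *\<^sub>R w)" for x
  proof -
    have "f (f x *\<^sub>R w - f w *\<^sub>R x) = 0" by (simp add: diff scale)
    hence "inner w (f x *\<^sub>R w - f w *\<^sub>R x) = 0" using p(2) unfolding w_def by blast
    hence "f x * (norm w)\<^sup>2 = f w * inner x w"
      by (simp add: inner_diff_right power2_norm_eq_inner inner_commute)
    thus ?thesis using w0 by (simp add: field_simps)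
  qed
  thus ?thesis by blast
qed

lemma adjoint_works_gen:
  fixes T :: "'h::{real_inner,complete_space} \<Rightarrow> 'h"
  assumes "bounded_linear T"
  shows "inner (T x) y = inner x (adjoint T y)"
proof -
  have "\<forall>y. \<exists>z. \<forall>x. inner (T x) y = inner x z"
  proof
    fix y
    have "bounded_linear (\<lambda>x. inner (T x) y)"
      using bounded_linear_compose[OF bounded_linear_inner_left assms] by simp
    thus "\<exists>z. \<forall>x. inner (T x) y = inner x z" using riesz by blast
  qed
  then obtain g where "\<forall>y x. inner (T x) y = inner x (g y)" by metis
  hence ex: "\<exists>g. \<forall>x y. inner (T x) y = inner x (g y)" by blast
  show ?thesis unfolding adjoint_def using someI_ex[OF ex] by blast
qed

lemma bl_from_adj:
  fixes T :: "'h::real_inner \<Rightarrow> 'h" and G :: "'h \<Rightarrow> 'h"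
  assumes "bounded_linear T" and adj: "\<And>x y. inner (T x) y = inner x (G y)"
  shows "bounded_linear G"
proof -
  interpret bounded_linear T by fact
  obtain K where K: "\<And>x. norm (T x) \<le> norm x * K" "K > 0" using pos_bounded by blast
  show ?thesis
  proof (rule bounded_linear_intro[where K=K])
    fix y z
    have "\<forall>x. inner x (G (y + z)) = inner x (G y + G z)"
      by (simp add: adj[symmetric] inner_add_right)
    thus "G (y + z) = G y + G z" using vector_eq_ldot by blast
  next
    fix r y
    have "\<forall>x. inner x (G (r *\<^sub>R y)) = inner x (r *\<^sub>R G y)"
      by (simp add: adj[symmetric])
    thus "G (r *\<^sub>R y) = r *\<^sub>R G y" using vector_eq_ldot by blast
  next
    fix y
    have "(norm (G y))\<^sup>2 = inner (T (G y)) y" by (simp add: adj power2_norm_eq_inner)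
    also have "\<dots> \<le> norm (T (G y)) * norm y" by (rule norm_cauchy_schwarz)
    also have "\<dots> \<le> norm (G y) * K * norm y" using K by (simp add: mult_right_mono)
    finally have "norm (G y) * norm (G y) \<le> norm (G y) * (K * norm y)" by (simp add: power2_eq_square mult.assoc)
    thus "norm (G y) \<le> norm y * K"
      using K(2) by (cases "G y = 0") (auto simp: mult.commute)
  qed
qed

lemma adjoint_bl:
  fixes T :: "'h::{real_inner,complete_space} \<Rightarrow> 'h"
  assumes "bounded_linear T"
  shows "bounded_linear (adjoint T)"
  using bl_from_adj[OF assms adjoint_works_gen[OF assms]] .

lemma adjoint_eqI:
  fixes T :: "'h::{real_inner,complete_space} \<Rightarrow> 'h"
  assumes "\<And>x y. inner (T x) y = inner x (G y)"
  shows "adjoint T = G"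
  using adjoint_unique assms by blast



lemma summable_enn[simp]: "(f:: 'b \<Rightarrow> ennreal) summable_on B"
  by (rule nonneg_summable_on_complete) simp

lemma finite_sum_le_infsum_enn:
  assumes "finite F" "F \<subseteq> A"
  shows "sum (f::'b \<Rightarrow> ennreal) F \<le> infsum f A"
proof -
  have "infsum f F \<le> infsum f A"
    by (rule infsum_mono_neutral) (use assms in auto)
  thus ?thesis using assms(1) by simp
qed

definition orthonormal :: "'a::real_inner set \<Rightarrow> bool" where
  "orthonormal B \<longleftrightarrow> (\<forall>e\<in>B. norm e = 1) \<and> (\<forall>e\<in>B. \<forall>f\<in>B. e \<noteq> f \<longrightarrow> inner e f = 0)"

lemma orthonormal_subset: "orthonormal B \<Longrightarrow> F \<subseteq> B \<Longrightarrow> orthonormal F"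
  unfolding orthonormal_def by (meson subsetD)

lemma onb_orthonormal: "orthonormal_basis B \<Longrightarrow> orthonormal B"
  unfolding orthonormal_basis_def orthonormal_def by simp

lemma onb_exists: "\<exists>B::'h::{real_inner,complete_space} set. orthonormal_basis B"
proof -
  let ?A = "{B::'h set. orthonormal B}"
  have "\<exists>M\<in>?A. \<forall>X\<in>?A. M \<subseteq> X \<longrightarrow> X = M"
  proof (rule subset_Zorn)
    fix C assume C: "subset.chain ?A C"
    have CC: "\<And>X. X \<in> C \<Longrightarrow> orthonormal X" "\<And>X Y. X \<in> C \<Longrightarrow> Y \<in> C \<Longrightarrow> X \<subseteq> Y \<or> Y \<subseteq> X"
      using C unfolding subset.chain_def by auto
    have "orthonormal (\<Union>C)"
      unfolding orthonormal_def
    proof (intro conjI ballI impI)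
      fix e assume "e \<in> \<Union>C"
      then obtain X where "X \<in> C" "e \<in> X" by blast
      thus "norm e = 1" using CC(1) unfolding orthonormal_def by blast
    next
      fix e f assume e: "e \<in> \<Union>C" and f: "f \<in> \<Union>C" and ef: "e \<noteq> f"
      then obtain X Y where XY: "X \<in> C" "e \<in> X" "Y \<in> C" "f \<in> Y" by blast
      have "\<exists>Z\<in>C. e \<in> Z \<and> f \<in> Z"
      proof (cases "X \<subseteq> Y")
        case True thus ?thesis using XY by blast
      next
        case False hence "Y \<subseteq> X" using CC(2)[OF XY(1) XY(3)] by blast
        thus ?thesis using XY by blast
      qed
      then obtain Z where Z: "Z \<in> C" "e \<in> Z" "f \<in> Z" by blast
      have "orthonormal Z" using CC(1) Z(1) .
      thus "inner e f = 0" using Z ef unfolding orthonormal_def by blast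
    qed
    thus "\<exists>U\<in>?A. \<forall>X\<in>C. X \<subseteq> U" by blast
  qed
  then obtain M where M0: "M \<in> ?A" and max0: "\<forall>X\<in>?A. M \<subseteq> X \<longrightarrow> X = M" ..
  have M: "orthonormal M" using M0 by simp
  have max: "\<And>X. orthonormal X \<Longrightarrow> M \<subseteq> X \<Longrightarrow> X = M" using max0 by simp
  have "closure (span M) = UNIV"
  proof (rule ccontr)
    assume "closure (span M) \<noteq> UNIV"
    then obtain y where y: "y \<notin> closure (span M)" by blast
    have sub: "subspace (closure (span M))" by (intro subspace_closure_gen subspace_span)
    obtain p where p: "p \<in> closure (span M)" "\<And>m. m \<in> closure (span M) \<Longrightarrow> inner (y - p) m = 0"
      using proj_exists[OF sub closed_closure, of y] by blast
    define w where "w = y - p"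
    have w0: "w \<noteq> 0" using y p(1) unfolding w_def by auto
    define e where "e = w /\<^sub>R norm w"
    have ne: "norm e = 1" unfolding e_def using w0 by simp
    have orth: "inner e f = 0" if "f \<in> M" for f
    proof -
      have "f \<in> closure (span M)" using that closure_subset span_base by blast
      hence "inner w f = 0" using p(2) unfolding w_def by blast
      thus ?thesis unfolding e_def by simp
    qed
    have eM: "e \<notin> M"
    proof
      assume "e \<in> M"
      hence "inner e e = 0" using orth by blast
      thus False using ne by (simp add: power2_norm_eq_inner[symmetric])
    qed
    have "orthonormal (insert e M)"
      using M ne orth unfolding orthonormal_def by (auto simp: inner_commute)
    hence "insert e M = M" using max by blast
    thus False using eM by blast
  qed
  thus ?thesis using M unfolding orthonormal_basis_def orthonormal_def by auto
qed

lemma some_onb: "orthonormal_basis (some_onb::'h::{real_inner,complete_space} set)"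
  unfolding some_onb_def by (rule someI_ex[OF onb_exists])

lemma inner_sum_orthonormal:
  assumes "orthonormal F" "finite F"
  shows "inner (\<Sum>e\<in>F. u e *\<^sub>R e) (\<Sum>e\<in>F. v e *\<^sub>R e) = (\<Sum>e\<in>F. u e * v e)"
proof -
  have "inner (\<Sum>e\<in>F. u e *\<^sub>R e) (\<Sum>e\<in>F. v e *\<^sub>R e) = (\<Sum>e\<in>F. \<Sum>f\<in>F. inner (u e *\<^sub>R e) (v f *\<^sub>R f))"
    unfolding inner_sum_left inner_sum_right by (rule sum.swap)
  also have "\<dots> = (\<Sum>e\<in>F. \<Sum>f\<in>F. if f = e then u e * v e else 0)"
  proof (intro sum.cong refl)
    fix e f assume "e \<in> F" "f \<in> F"
    thus "inner (u e *\<^sub>R e) (v f *\<^sub>R f) = (if f = e then u e * v e else 0)"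
      using assms(1) unfolding orthonormal_def by (auto simp: power2_norm_eq_inner[symmetric])
  qed
  also have "\<dots> = (\<Sum>e\<in>F. u e * v e)" using assms(2) by simp
  finally show ?thesis .
qed

lemma norm_expansion:
  assumes "orthonormal F" "finite F"
  shows "(norm (x - (\<Sum>e\<in>F. u e *\<^sub>R e)))\<^sup>2 =
    (norm x)\<^sup>2 - 2 * (\<Sum>e\<in>F. u e * inner x e) + (\<Sum>e\<in>F. (u e)\<^sup>2)"
proof -
  have "inner x (\<Sum>e\<in>F. u e *\<^sub>R e) = (\<Sum>e\<in>F. u e * inner x e)"
    by (simp add: inner_sum_right)
  moreover have "inner (\<Sum>e\<in>F. u e *\<^sub>R e) (\<Sum>e\<in>F. u e *\<^sub>R e) = (\<Sum>e\<in>F. (u e)\<^sup>2)"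
    using inner_sum_orthonormal[OF assms] by (simp add: power2_eq_square)
  ultimately show ?thesis
    unfolding power2_norm_eq_inner
    by (simp add: inner_diff_left inner_diff_right inner_commute)
qed

lemma bessel_finite:
  assumes "orthonormal F" "finite F"
  shows "(\<Sum>e\<in>F. (inner x e)\<^sup>2) \<le> (norm x)\<^sup>2"
proof -
  have "0 \<le> (norm (x - (\<Sum>e\<in>F. inner x e *\<^sub>R e)))\<^sup>2" by simp
  also have "\<dots> = (norm x)\<^sup>2 - (\<Sum>e\<in>F. (inner x e)\<^sup>2)"
    using norm_expansion[OF assms, of x "\<lambda>e. inner x e"] by (simp add: power2_eq_square)
  finally show ?thesis by simp
qed

lemma approx_finite:
  assumes "orthonormal F" "finite F"
  shows "(norm x)\<^sup>2 \<le> (norm (x - (\<Sum>e\<in>F. u e *\<^sub>R e)))\<^sup>2 + (\<Sum>e\<in>F. (inner x e)\<^sup>2)"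
proof -
  have "0 \<le> (\<Sum>e\<in>F. (u e - inner x e)\<^sup>2)" by (simp add: sum_nonneg)
  also have "(\<Sum>e\<in>F. (u e - inner x e)\<^sup>2) = (\<Sum>e\<in>F. (u e)\<^sup>2) - 2 * (\<Sum>e\<in>F. u e * inner x e) + (\<Sum>e\<in>F. (inner x e)\<^sup>2)"
    by (simp add: power2_diff sum.distrib sum_subtractf sum_distrib_left mult.assoc)
  finally show ?thesis using norm_expansion[OF assms, of x u] by simp
qed

lemma infsum_sum_ennreal:
  fixes f :: "'a \<Rightarrow> 'b \<Rightarrow> ennreal"
  assumes "finite A"
  shows "(\<Sum>\<^sub>\<infinity>x\<in>B. \<Sum>a\<in>A. f a x) = (\<Sum>a\<in>A. \<Sum>\<^sub>\<infinity>x\<in>B. f a x)"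
  using assms
proof (induction A rule: finite_induct)
  case empty thus ?case by simp
next
  case (insert a A)
  have "(\<Sum>\<^sub>\<infinity>x\<in>B. \<Sum>a\<in>insert a A. f a x) = (\<Sum>\<^sub>\<infinity>x\<in>B. f a x + (\<Sum>a\<in>A. f a x))"
    using insert by simp
  also have "\<dots> = (\<Sum>\<^sub>\<infinity>x\<in>B. f a x) + (\<Sum>\<^sub>\<infinity>x\<in>B. \<Sum>a\<in>A. f a x)"
    by (rule infsum_add) simp_all
  finally show ?case using insert by simp
qed

lemma parseval:
  fixes B :: "'h::{real_inner,complete_space} set"
  assumes onb: "orthonormal_basis B"
  shows "(\<Sum>\<^sub>\<infinity>e\<in>B. ennreal ((inner x e)\<^sup>2)) = ennreal ((norm x)\<^sup>2)"
proof (rule antisym)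
  have on: "orthonormal B" using onb by (rule onb_orthonormal)
  show "(\<Sum>\<^sub>\<infinity>e\<in>B. ennreal ((inner x e)\<^sup>2)) \<le> ennreal ((norm x)\<^sup>2)"
  proof (rule infsum_le_finite_sums)
    fix F assume F: "finite F" "F \<subseteq> B"
    have "orthonormal F" using on F(2) by (rule orthonormal_subset)
    hence "(\<Sum>e\<in>F. (inner x e)\<^sup>2) \<le> (norm x)\<^sup>2" using F(1) by (rule bessel_finite)
    thus "(\<Sum>e\<in>F. ennreal ((inner x e)\<^sup>2)) \<le> ennreal ((norm x)\<^sup>2)"
      by (simp add: sum_ennreal ennreal_leI)
  qed simp
  show "ennreal ((norm x)\<^sup>2) \<le> (\<Sum>\<^sub>\<infinity>e\<in>B. ennreal ((inner x e)\<^sup>2))"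
  proof (rule ennreal_le_epsilon)
    fix \<epsilon> :: real assume \<epsilon>: "0 < \<epsilon>"
    have "x \<in> closure (span B)" using onb unfolding orthonormal_basis_def by simp
    moreover have "0 < sqrt \<epsilon>" using \<epsilon> by simp
    ultimately obtain y where y: "y \<in> span B" "dist y x < sqrt \<epsilon>"
      unfolding closure_approachable by blast
    then obtain t r where t: "finite t" "t \<subseteq> B" "y = (\<Sum>a\<in>t. r a *\<^sub>R a)"
      unfolding span_explicit by blast
    have ont: "orthonormal t" using on t(2) by (rule orthonormal_subset)
    have "(norm (x - y))\<^sup>2 \<le> \<epsilon>"
    proof -
      have "norm (x - y) \<le> sqrt \<epsilon>" using y(2) by (simp add: dist_norm norm_minus_commute)
      hence "(norm (x - y))\<^sup>2 \<le> (sqrt \<epsilon>)\<^sup>2" by (intro power_mono) auto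
      thus ?thesis using \<epsilon> by simp
    qed
    hence "(norm x)\<^sup>2 \<le> \<epsilon> + (\<Sum>e\<in>t. (inner x e)\<^sup>2)"
      using approx_finite[OF ont t(1), of x r] t(3) by simp
    hence "ennreal ((norm x)\<^sup>2) \<le> ennreal \<epsilon> + ennreal (\<Sum>e\<in>t. (inner x e)\<^sup>2)"
      using \<epsilon> by (simp add: ennreal_plus[symmetric] sum_nonneg ennreal_leI del: ennreal_plus)
    also have "ennreal (\<Sum>e\<in>t. (inner x e)\<^sup>2) = (\<Sum>e\<in>t. ennreal ((inner x e)\<^sup>2))"
      by (simp add: sum_ennreal)
    also have "\<dots> \<le> (\<Sum>\<^sub>\<infinity>e\<in>B. ennreal ((inner x e)\<^sup>2))"
      by (rule finite_sum_le_infsum_enn) (use t in auto)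
    finally show "ennreal ((norm x)\<^sup>2) \<le> (\<Sum>\<^sub>\<infinity>e\<in>B. ennreal ((inner x e)\<^sup>2)) + ennreal \<epsilon>"
      by (simp add: add.commute)
  qed
qed

lemma hs_le:
  fixes B :: "'h::{real_inner,complete_space} set"
  assumes onb: "orthonormal_basis B" and adj: "\<And>x y. inner (F x) y = inner x (G y)"
  shows "(\<Sum>\<^sub>\<infinity>e\<in>B. ennreal ((norm (F e))\<^sup>2)) \<le> (\<Sum>\<^sub>\<infinity>f\<in>B. ennreal ((norm (G f))\<^sup>2))"
proof (rule infsum_le_finite_sums)
  have on: "orthonormal B" using onb by (rule onb_orthonormal)
  fix E assume E: "finite E" "E \<subseteq> B"
  have onE: "orthonormal E" using on E(2) by (rule orthonormal_subset)
  have "(\<Sum>e\<in>E. ennreal ((norm (F e))\<^sup>2)) = (\<Sum>e\<in>E. \<Sum>\<^sub>\<infinity>f\<in>B. ennreal ((inner (F e) f)\<^sup>2))"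
    using parseval[OF onb] by simp
  also have "\<dots> = (\<Sum>\<^sub>\<infinity>f\<in>B. \<Sum>e\<in>E. ennreal ((inner (F e) f)\<^sup>2))"
    by (rule infsum_sum_ennreal[symmetric, OF E(1)])
  also have "\<dots> = (\<Sum>\<^sub>\<infinity>f\<in>B. \<Sum>e\<in>E. ennreal ((inner (G f) e)\<^sup>2))"
    by (intro infsum_cong sum.cong refl) (metis adj inner_commute)
  also have "\<dots> \<le> (\<Sum>\<^sub>\<infinity>f\<in>B. ennreal ((norm (G f))\<^sup>2))"
  proof (rule infsum_mono)
    fix f
    have "(\<Sum>e\<in>E. (inner (G f) e)\<^sup>2) \<le> (norm (G f))\<^sup>2" by (rule bessel_finite[OF onE E(1)])
    thus "(\<Sum>e\<in>E. ennreal ((inner (G f) e)\<^sup>2)) \<le> ennreal ((norm (G f))\<^sup>2)"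
      by (simp add: sum_ennreal ennreal_leI)
  qed simp_all
  finally show "(\<Sum>e\<in>E. ennreal ((norm (F e))\<^sup>2)) \<le> (\<Sum>\<^sub>\<infinity>f\<in>B. ennreal ((norm (G f))\<^sup>2))" .
qed simp

lemma hs_eq:
  fixes B :: "'h::{real_inner,complete_space} set"
  assumes onb: "orthonormal_basis B" and adj: "\<And>x y. inner (F x) y = inner x (G y)"
  shows "(\<Sum>\<^sub>\<infinity>e\<in>B. ennreal ((norm (F e))\<^sup>2)) = (\<Sum>\<^sub>\<infinity>f\<in>B. ennreal ((norm (G f))\<^sup>2))"
proof (rule antisym)
  show "(\<Sum>\<^sub>\<infinity>e\<in>B. ennreal ((norm (F e))\<^sup>2)) \<le> (\<Sum>\<^sub>\<infinity>f\<in>B. ennreal ((norm (G f))\<^sup>2))"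
    by (rule hs_le[OF onb adj])
  have "\<And>x y. inner (G x) y = inner x (F y)" by (metis adj inner_commute)
  thus "(\<Sum>\<^sub>\<infinity>f\<in>B. ennreal ((norm (G f))\<^sup>2)) \<le> (\<Sum>\<^sub>\<infinity>e\<in>B. ennreal ((norm (F e))\<^sup>2))"
    by (rule hs_le[OF onb])
qed



section \<open>Coefficients of sqrt(1 - x)\<close>

lemma gch_rec: "(a::real) gchoose Suc k = (a gchoose k) * (a - of_nat k) / of_nat (Suc k)"
proof -
  have "(a gchoose Suc k) * fact (Suc k) = (\<Prod>i = 0..<Suc k. a - of_nat i)"
    by (rule gbinomial_mult_fact')
  also have "\<dots> = (\<Prod>i = 0..<k. a - of_nat i) * (a - of_nat k)" by simp
  also have "(\<Prod>i = 0..<k. a - of_nat i) = (a gchoose k) * fact k"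
    by (rule gbinomial_mult_fact'[symmetric])
  finally have "fact k * ((a gchoose Suc k) * of_nat (Suc k)) = fact k * ((a gchoose k) * (a - of_nat k))"
    by (simp only: fact_Suc of_nat_mult mult_ac)
  moreover have "(fact k :: real) \<noteq> 0" by simp
  ultimately have "(a gchoose Suc k) * of_nat (Suc k) = (a gchoose k) * (a - of_nat k)"
    by (metis mult_left_cancel)
  thus ?thesis by (simp add: field_simps)
qed

definition gco :: "nat \<Rightarrow> real" where "gco k = ((1/2::real) gchoose k) * (-1) ^ k"

lemma gco_0[simp]: "gco 0 = 1" by (simp add: gco_def)

lemma gco_Suc: "gco (Suc k) = gco k * (of_nat k - 1/2) / of_nat (Suc k)"
  unfolding gco_def gch_rec by (simp add: field_simps)

lemma gco_nonpos: "k \<ge> 1 \<Longrightarrow> gco k \<le> 0"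
proof (induction k)
  case 0 thus ?case by simp
next
  case (Suc k)
  show ?case
  proof (cases "k = 0")
    case True thus ?thesis by (simp add: gco_Suc)
  next
    case False
    hence "gco k \<le> 0" "real k - 1/2 \<ge> 0" using Suc by auto
    hence "gco k * (real k - 1/2) \<le> 0" by (simp add: mult_nonpos_nonneg)
    thus ?thesis by (simp add: gco_Suc divide_nonpos_pos)
  qed
qed

lemma gco_partial_nonneg: "0 \<le> (\<Sum>k\<le>m. gco k)"
proof -
  have eq: "(\<Sum>k\<le>m. gco k) = (-1) ^ m * ((1/2 - 1 :: real) gchoose m)"
    unfolding gco_def by (rule gbinomial_sum_lower_neg)
  have "0 \<le> (-1) ^ m * ((1/2 - 1 :: real) gchoose m)"
  proof (induction m)
    case 0 thus ?case by simp
  next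
    case (Suc m)
    have "(-1) ^ Suc m * ((1/2 - 1 :: real) gchoose Suc m)
        = ((-1) ^ m * ((1/2 - 1 :: real) gchoose m)) * ((of_nat m + 1/2) / of_nat (Suc m))"
      unfolding gch_rec by (simp add: field_simps)
    also have "0 \<le> \<dots>" using Suc.IH by (rule mult_nonneg_nonneg) simp
    finally show ?case by simp
  qed
  thus ?thesis using eq by simp
qed

lemma gco_abs_partial: "(\<Sum>k\<le>m. \<bar>gco k\<bar>) = 2 - (\<Sum>k\<le>m. gco k)"
proof (induction m)
  case 0 thus ?case by simp
next
  case (Suc m)
  have "\<bar>gco (Suc m)\<bar> = - gco (Suc m)" using gco_nonpos[of "Suc m"] by simp
  thus ?case using Suc by simp
qed

lemma gco_abs_summable: "summable (\<lambda>k. \<bar>gco k\<bar>)"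
proof (rule bounded_imp_summable)
  fix m show "(\<Sum>k\<le>m. \<bar>gco k\<bar>) \<le> 2" using gco_abs_partial[of m] gco_partial_nonneg[of m] by linarith
qed simp

lemma gco_summable: "summable gco"
  by (rule summable_norm_cancel) (simp add: gco_abs_summable)

lemma gco_suminf_nonneg: "0 \<le> suminf gco"
proof (rule LIMSEQ_le_const[OF summable_LIMSEQ[OF gco_summable]])
  show "\<exists>N. \<forall>n\<ge>N. 0 \<le> sum gco {..<n}"
  proof (intro exI allI impI)
    fix n :: nat assume "1 \<le> n"
    then obtain m where "n = Suc m" by (cases n) auto
    thus "0 \<le> sum gco {..<n}" using gco_partial_nonneg[of m] by (simp add: lessThan_Suc_atMost)
  qed
qed

lemma one_gchoose: "(1::real) gchoose k = (if k \<le> 1 then 1 else 0)"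
proof (cases "k \<le> 1")
  case True thus ?thesis by (cases k) auto
next
  case False
  have "fact k * ((1::real) gchoose k) = (\<Prod>i = 0..<k. 1 - of_nat i)" by (rule gbinomial_mult_fact)
  also have "\<dots> = 0" using False by (intro prod_zero) (auto intro!: bexI[of _ 1])
  finally show ?thesis using False by simp
qed

lemma gco_cauchy: "(\<Sum>i\<le>k. gco i * gco (k - i)) = (if k = 0 then 1 else if k = 1 then -1 else 0)"
proof -
  have "(\<Sum>i\<le>k. gco i * gco (k - i)) = (\<Sum>i\<in>{0..k}. (((1/2::real) gchoose i) * ((1/2) gchoose (k - i))) * (-1) ^ k)"
  proof (intro sum.cong)
    fix i assume "i \<in> {0..k}"
    hence "(-1::real) ^ i * (-1) ^ (k - i) = (-1) ^ k" by (simp add: power_add[symmetric])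
    thus "gco i * gco (k - i) = (((1/2::real) gchoose i) * ((1/2) gchoose (k - i))) * (-1) ^ k"
      unfolding gco_def by (metis (no_types, lifting) mult.assoc mult.left_commute)
  qed auto
  also have "\<dots> = (\<Sum>i\<in>{0..k}. ((1/2::real) gchoose i) * ((1/2) gchoose (k - i))) * (-1) ^ k"
    by (simp add: sum_distrib_right)
  also have "(\<Sum>i\<in>{0..k}. ((1/2::real) gchoose i) * ((1/2) gchoose (k - i))) = (1/2 + 1/2) gchoose k"
    by (rule gbinomial_Vandermonde)
  also have "(1/2 + 1/2 :: real) = 1" by simp
  finally show ?thesis unfolding one_gchoose by (cases k; cases "k - 1") auto
qed



section \<open>Positive operators\<close>

lemma disc_le:
  fixes a b c :: real
  assumes q: "\<And>t. 0 \<le> a + 2 * t * b + t\<^sup>2 * c" and c: "0 \<le> c"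
  shows "b\<^sup>2 \<le> a * c"
proof (cases "c = 0")
  case True
  have "b = 0"
  proof (rule ccontr)
    assume b: "b \<noteq> 0"
    have "0 \<le> a + 2 * (- (a + 1) / (2 * b)) * b" using q[of "- (a + 1) / (2 * b)"] True by simp
    also have "2 * (- (a + 1) / (2 * b)) * b = - (a + 1)" using b by (simp add: field_simps)
    finally show False by simp
  qed
  thus ?thesis using True by simp
next
  case False
  hence cp: "0 < c" using c by simp
  have "0 \<le> a + 2 * (- b / c) * b + (- b / c)\<^sup>2 * c" by (rule q)
  also have "\<dots> = a - b\<^sup>2 / c" using cp by (simp add: power2_eq_square field_simps)
  finally have "b\<^sup>2 / c \<le> a" by simp
  thus ?thesis using cp by (simp add: pos_divide_le_eq mult.commute)
qed

lemma pos_cs: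
  assumes "positive_op P"
  shows "(inner (P x) y)\<^sup>2 \<le> inner (P x) x * inner (P y) y"
proof -
  have bl: "bounded_linear P" and sym: "\<And>x y. inner (P x) y = inner x (P y)"
    and pos: "\<And>x. 0 \<le> inner (P x) x" using assms unfolding positive_op_def by auto
  interpret bounded_linear P by fact
  have "0 \<le> inner (P x) x + 2 * t * inner (P x) y + t\<^sup>2 * inner (P y) y" for t
  proof -
    have "0 \<le> inner (P (x + t *\<^sub>R y)) (x + t *\<^sub>R y)" by (rule pos)
    also have "\<dots> = inner (P x) x + t * inner (P x) y + t * inner (P y) x + t * t * inner (P y) y"
      by (simp add: add scale inner_add_left inner_add_right algebra_simps)
    also have "inner (P y) x = inner (P x) y" by (metis sym inner_commute)
    finally show ?thesis by (simp add: power2_eq_square algebra_simps)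
  qed
  thus ?thesis by (rule disc_le) (rule pos)
qed

lemma pos_zero:
  assumes "positive_op P" "inner (P y) y = 0"
  shows "P y = 0"
proof -
  have "(inner (P y) (P y))\<^sup>2 \<le> inner (P y) y * inner (P (P y)) (P y)" by (rule pos_cs[OF assms(1)])
  hence "(inner (P y) (P y))\<^sup>2 \<le> 0" using assms(2) by simp
  hence "inner (P y) (P y) = 0" by simp
  thus ?thesis by simp
qed

lemma pos_unique_commuting:
  assumes P: "positive_op P" and R: "positive_op R"
    and sq: "\<And>x. P (P x) = R (R x)" and comm: "\<And>x. R (P x) = P (R x)"
  shows "P = R"
proof
  fix x
  have blP: "bounded_linear P" and symP: "\<And>x y. inner (P x) y = inner x (P y)"
    and posP: "\<And>x. 0 \<le> inner (P x) x" using P unfolding positive_op_def by auto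
  have blR: "bounded_linear R" and symR: "\<And>x y. inner (R x) y = inner x (R y)"
    and posR: "\<And>x. 0 \<le> inner (R x) x" using R unfolding positive_op_def by auto
  interpret p: bounded_linear P by fact
  interpret r: bounded_linear R by fact
  define y where "y = P x - R x"
  have "P y + R y = 0"
    unfolding y_def by (simp add: p.diff r.diff sq comm)
  hence "inner (P y) y + inner (R y) y = 0" by (metis inner_add_left inner_zero_left)
  hence "inner (P y) y = 0" "inner (R y) y = 0" using posP[of y] posR[of y] by linarith+
  hence Py: "P y = 0" and Ry: "R y = 0" using pos_zero P R by blast+
  have "inner y y = inner (P x) y - inner (R x) y" unfolding y_def by (simp add: inner_diff_left)
  also have "\<dots> = 0" by (simp add: symP symR Py Ry)
  finally show "P x = R x" unfolding y_def by simp
qed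

section \<open>The square-root series\<close>

lemma funpow_bl:
  fixes B :: "'a::real_normed_vector \<Rightarrow> 'a"
  shows "bounded_linear B \<Longrightarrow> bounded_linear (B ^^ k)"
proof (induction k)
  case 0
  have "B ^^ 0 = (\<lambda>x. x)" by (simp add: fun_eq_iff)
  thus ?case using bounded_linear_ident by metis
next
  case (Suc k)
  have "B ^^ Suc k = (\<lambda>x. B ((B ^^ k) x))" by (simp add: fun_eq_iff)
  thus ?case using bounded_linear_compose[OF Suc.prems Suc.IH[OF Suc.prems]] by metis
qed

lemma funpow_norm_le:
  fixes B :: "'a::real_normed_vector \<Rightarrow> 'a"
  assumes "\<And>x. norm (B x) \<le> norm x"
  shows "norm ((B ^^ k) x) \<le> norm x"
proof (induction k)
  case 0 thus ?case by simp
next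
  case (Suc k) thus ?case using assms[of "(B ^^ k) x"] by simp
qed

lemma funpow_sym:
  fixes B :: "'a::real_inner \<Rightarrow> 'a"
  assumes "\<And>x y. inner (B x) y = inner x (B y)"
  shows "inner ((B ^^ k) x) y = inner x ((B ^^ k) y)"
proof (induction k arbitrary: x y)
  case 0 thus ?case by simp
next
  case (Suc k)
  have "inner ((B ^^ Suc k) x) y = inner ((B ^^ k) x) (B y)" by (simp add: assms)
  also have "\<dots> = inner x ((B ^^ k) (B y))" by (rule Suc)
  also have "(B ^^ k) (B y) = (B ^^ Suc k) y" by (simp add: funpow_Suc_right del: funpow.simps)
  finally show ?case .
qed

lemma funpow_commute:
  fixes B :: "'a \<Rightarrow> 'a"
  assumes "\<And>x. R (B x) = B (R x)"
  shows "R ((B ^^ k) x) = (B ^^ k) (R x)"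
  by (induction k arbitrary: x) (simp_all add: assms)

lemma summable_Cauchy_rev:
  fixes f :: "nat \<Rightarrow> 'a::{real_normed_vector,complete_space}"
  assumes r: "\<forall>e>0. \<exists>N. \<forall>m\<ge>N. \<forall>n. norm (sum f {m..<n}) < e"
  shows "summable f"
  unfolding summable_iff_convergent Cauchy_convergent_iff [symmetric] Cauchy_iff
proof clarify
  fix e :: real
  assume "0 < e"
  with r obtain N where N: "\<And>m n. m \<ge> N \<Longrightarrow> norm (sum f {m..<n}) < e"
    by blast
  have "norm (sum f {..<m} - sum f {..<n}) < e" if "m\<ge>N" "n\<ge>N" for m n
  proof (cases m n rule: linorder_class.le_cases)
    assume "m \<le> n"
    then show ?thesis
      by (metis N finite_lessThan lessThan_minus_lessThan lessThan_subset_iff norm_minus_commute sum_diff \<open>m\<ge>N\<close>)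
  next
    assume "n \<le> m"
    then show ?thesis
      by (metis N finite_lessThan lessThan_minus_lessThan lessThan_subset_iff sum_diff \<open>n\<ge>N\<close>)
  qed
  then show "\<exists>M. \<forall>m\<ge>M. \<forall>n\<ge>M. norm (sum f {..<m} - sum f {..<n}) < e"
    by blast
qed

lemma summable_norm_cancel':
  fixes f :: "nat \<Rightarrow> 'a::{real_normed_vector,complete_space}"
  assumes "summable (\<lambda>n. norm (f n))"
  shows "summable f"
proof (rule summable_Cauchy_rev, intro allI impI)
  fix e :: real assume e: "0 < e"
  obtain N where N: "\<And>m n. m \<ge> N \<Longrightarrow> norm (sum (\<lambda>n. norm (f n)) {m..<n}) < e"
    using assms e unfolding summable_Cauchy by blast
  show "\<exists>N. \<forall>m\<ge>N. \<forall>n. norm (sum f {m..<n}) < e"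
  proof (intro exI allI impI)
    fix m n assume "N \<le> m"
    have "norm (sum f {m..<n}) \<le> sum (\<lambda>n. norm (f n)) {m..<n}" by (rule norm_sum)
    also have "\<dots> \<le> norm (sum (\<lambda>n. norm (f n)) {m..<n})" by simp
    also have "\<dots> < e" using N \<open>N \<le> m\<close> by blast
    finally show "norm (sum f {m..<n}) < e" .
  qed
qed

lemma summable_norm':
  fixes f :: "nat \<Rightarrow> 'a::{real_normed_vector,complete_space}"
  assumes s: "summable (\<lambda>n. norm (f n))"
  shows "norm (suminf f) \<le> (\<Sum>n. norm (f n))"
proof (rule LIMSEQ_le)
  show "(\<lambda>n. norm (\<Sum>i<n. f i)) \<longlonglongrightarrow> norm (suminf f)"
    by (intro tendsto_norm summable_LIMSEQ summable_norm_cancel'[OF s])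
  show "(\<lambda>n. \<Sum>i<n. norm (f i)) \<longlonglongrightarrow> (\<Sum>n. norm (f n))" by (rule summable_LIMSEQ[OF s])
  show "\<exists>N. \<forall>n\<ge>N. norm (\<Sum>i<n. f i) \<le> (\<Sum>i<n. norm (f i))" by (auto intro: norm_sum)
qed

lemma Cauchy_product_sums_inner:
  fixes a b :: "nat \<Rightarrow> 'a::{real_inner,complete_space}"
  assumes a: "summable (\<lambda>k. norm (a k))"
    and b: "summable (\<lambda>k. norm (b k))"
  shows "(\<lambda>k. \<Sum>i\<le>k. inner (a i) (b (k - i))) sums (inner (\<Sum>k. a k) (\<Sum>k. b k))"
proof -
  let ?S1 = "\<lambda>n::nat. {..<n} \<times> {..<n}"
  let ?S2 = "\<lambda>n::nat. {(i,j). i + j < n}"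
  have S1_mono: "\<And>m n. m \<le> n \<Longrightarrow> ?S1 m \<subseteq> ?S1 n" by auto
  have S2_le_S1: "\<And>n. ?S2 n \<subseteq> ?S1 n" by auto
  have S1_le_S2: "\<And>n. ?S1 (n div 2) \<subseteq> ?S2 n" by auto
  have finite_S1: "\<And>n. finite (?S1 n)" by simp
  with S2_le_S1 have finite_S2: "\<And>n. finite (?S2 n)" by (rule finite_subset)

  let ?g = "\<lambda>(i,j). inner (a i) (b j)"
  let ?f = "\<lambda>(i,j). norm (a i) * norm (b j)"
  have f_nonneg: "\<And>x. 0 \<le> ?f x" by auto
  then have norm_sum_f: "\<And>A. norm (sum ?f A) = sum ?f A"
    unfolding real_norm_def
    by (simp only: abs_of_nonneg sum_nonneg [rule_format])

  have "(\<lambda>n. inner (\<Sum>k<n. a k) (\<Sum>k<n. b k)) \<longlonglongrightarrow> inner (\<Sum>k. a k) (\<Sum>k. b k)"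
    by (intro tendsto_inner summable_LIMSEQ summable_norm_cancel' [OF a] summable_norm_cancel' [OF b])
  moreover have "inner (\<Sum>k<n. a k) (\<Sum>k<n. b k) = sum ?g (?S1 n)" for n
  proof -
    have "inner (\<Sum>k<n. a k) (\<Sum>k<n. b k) = (\<Sum>i<n. inner (a i) (\<Sum>k<n. b k))" by (rule inner_sum_left)
    also have "\<dots> = (\<Sum>i<n. \<Sum>j<n. inner (a i) (b j))" by (simp only: inner_sum_right)
    also have "\<dots> = sum ?g (?S1 n)" by (rule sum.cartesian_product)
    finally show ?thesis .
  qed
  ultimately have 1: "(\<lambda>n. sum ?g (?S1 n)) \<longlonglongrightarrow> inner (\<Sum>k. a k) (\<Sum>k. b k)"
    by simp

  have "(\<lambda>n. (\<Sum>k<n. norm (a k)) * (\<Sum>k<n. norm (b k))) \<longlonglongrightarrow> (\<Sum>k. norm (a k)) * (\<Sum>k. norm (b k))"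
    using a b by (intro tendsto_mult summable_LIMSEQ)
  then have "(\<lambda>n. sum ?f (?S1 n)) \<longlonglongrightarrow> (\<Sum>k. norm (a k)) * (\<Sum>k. norm (b k))"
    by (simp only: sum_product sum.Sigma [rule_format] finite_lessThan)
  then have "convergent (\<lambda>n. sum ?f (?S1 n))"
    by (rule convergentI)
  then have Cauchy: "Cauchy (\<lambda>n. sum ?f (?S1 n))"
    by (rule convergent_Cauchy)
  have "Zfun (\<lambda>n. sum ?f (?S1 n - ?S2 n)) sequentially"
  proof (rule ZfunI, simp only: eventually_sequentially norm_sum_f)
    fix r :: real
    assume r: "0 < r"
    from CauchyD [OF Cauchy r] obtain N
      where "\<forall>m\<ge>N. \<forall>n\<ge>N. norm (sum ?f (?S1 m) - sum ?f (?S1 n)) < r" ..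
    then have "\<And>m n. N \<le> n \<Longrightarrow> n \<le> m \<Longrightarrow> norm (sum ?f (?S1 m - ?S1 n)) < r"
      by (simp only: sum_diff finite_S1 S1_mono)
    then have N: "\<And>m n. N \<le> n \<Longrightarrow> n \<le> m \<Longrightarrow> sum ?f (?S1 m - ?S1 n) < r"
      by (simp only: norm_sum_f)
    show "\<exists>N. \<forall>n\<ge>N. sum ?f (?S1 n - ?S2 n) < r"
    proof (intro exI allI impI)
      fix n
      assume "2 * N \<le> n"
      then have n: "N \<le> n div 2" by simp
      have "sum ?f (?S1 n - ?S2 n) \<le> sum ?f (?S1 n - ?S1 (n div 2))"
        by (intro sum_mono2 finite_Diff finite_S1 f_nonneg Diff_mono subset_refl S1_le_S2)
      also have "\<dots> < r"
        using n div_le_dividend by (rule N)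
      finally show "sum ?f (?S1 n - ?S2 n) < r" .
    qed
  qed
  then have "Zfun (\<lambda>n. sum ?g (?S1 n - ?S2 n)) sequentially"
    apply (rule Zfun_le [rule_format])
    apply (simp only: norm_sum_f)
    apply (rule order_trans [OF norm_sum sum_mono])
    apply (auto simp add: Cauchy_Schwarz_ineq2)
    done
  then have 2: "(\<lambda>n. sum ?g (?S1 n) - sum ?g (?S2 n)) \<longlonglongrightarrow> 0"
    unfolding tendsto_Zfun_iff diff_0_right
    by (simp only: sum_diff finite_S1 S2_le_S1)
  with 1 have "(\<lambda>n. sum ?g (?S2 n)) \<longlonglongrightarrow> inner (\<Sum>k. a k) (\<Sum>k. b k)"
    by (rule Lim_transform2)
  then show ?thesis
    by (simp only: sums_def sum.triangle_reindex)
qed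



locale sqB =
  fixes B :: "'h::{real_inner,complete_space} \<Rightarrow> 'h"
  assumes bl: "bounded_linear B"
    and sym: "\<And>x y. inner (B x) y = inner x (B y)"
    and contr: "\<And>x. norm (B x) \<le> norm x"
begin

definition Sq where "Sq x = (\<Sum>k. gco k *\<^sub>R (B ^^ k) x)"

lemma blk: "bounded_linear (B ^^ k)" by (rule funpow_bl[OF bl])

lemma norm_summ: "summable (\<lambda>k. norm (gco k *\<^sub>R (B ^^ k) x))"
proof (rule summable_comparison_test[OF _ summable_mult2[OF gco_abs_summable, of "norm x"]])
  show "\<exists>N. \<forall>n\<ge>N. norm (norm (gco n *\<^sub>R (B ^^ n) x)) \<le> \<bar>gco n\<bar> * norm x"
    using funpow_norm_le[of B, OF contr] by (auto intro!: mult_left_mono)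
qed

lemma summ: "summable (\<lambda>k. gco k *\<^sub>R (B ^^ k) x)"
  by (rule summable_norm_cancel') (rule norm_summ)

lemma Sq_add: "Sq (x + y) = Sq x + Sq y"
proof -
  have "(\<lambda>k. gco k *\<^sub>R (B ^^ k) (x + y)) = (\<lambda>k. gco k *\<^sub>R (B ^^ k) x + gco k *\<^sub>R (B ^^ k) y)"
    using blk by (simp add: linear_simps scaleR_add_right)
  thus ?thesis unfolding Sq_def by (simp add: suminf_add[OF summ summ])
qed

lemma Sq_scale: "Sq (r *\<^sub>R x) = r *\<^sub>R Sq x"
proof -
  have "(\<lambda>k. gco k *\<^sub>R (B ^^ k) (r *\<^sub>R x)) = (\<lambda>k. r *\<^sub>R (gco k *\<^sub>R (B ^^ k) x))"
    using blk by (simp add: linear_simps mult.commute)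
  thus ?thesis unfolding Sq_def by (simp add: suminf_scaleR_right[OF summ])
qed

lemma Sq_bound: "norm (Sq x) \<le> norm x * suminf (\<lambda>k. \<bar>gco k\<bar>)"
proof -
  have "norm (Sq x) \<le> (\<Sum>k. norm (gco k *\<^sub>R (B ^^ k) x))"
    unfolding Sq_def by (rule summable_norm'[OF norm_summ])
  also have "\<dots> \<le> (\<Sum>k. \<bar>gco k\<bar> * norm x)"
  proof (rule suminf_le)
    fix k show "norm (gco k *\<^sub>R (B ^^ k) x) \<le> \<bar>gco k\<bar> * norm x"
      using funpow_norm_le[of B, OF contr] by (auto intro!: mult_left_mono)
  qed (use norm_summ summable_mult2[OF gco_abs_summable] in auto)
  also have "\<dots> = norm x * suminf (\<lambda>k. \<bar>gco k\<bar>)"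
    using suminf_mult2[OF gco_abs_summable, of "norm x"] by (simp add: mult.commute)
  finally show ?thesis .
qed

lemma Sq_bl: "bounded_linear Sq"
  by (rule bounded_linear_intro[OF Sq_add Sq_scale Sq_bound])

lemma inner_Sq: "inner (Sq x) y = (\<Sum>k. gco k * inner ((B ^^ k) x) y)"
proof -
  have "inner (Sq x) y = (\<Sum>k. inner (gco k *\<^sub>R (B ^^ k) x) y)"
    unfolding Sq_def by (rule bounded_linear.suminf[OF bounded_linear_inner_left summ])
  thus ?thesis by simp
qed

lemma summ_inner: "summable (\<lambda>k. gco k * inner ((B ^^ k) x) y)"
  using bounded_linear.summable[OF bounded_linear_inner_left summ, of x y] by simp

lemma Sq_sym: "inner (Sq x) y = inner x (Sq y)"
proof -
  have "inner x (Sq y) = inner (Sq y) x" by (rule inner_commute)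
  also have "\<dots> = (\<Sum>k. gco k * inner ((B ^^ k) y) x)" by (rule inner_Sq)
  also have "\<dots> = (\<Sum>k. gco k * inner ((B ^^ k) x) y)"
    using funpow_sym[of B, OF sym] by (simp add: inner_commute)
  finally show ?thesis by (simp add: inner_Sq)
qed

lemma Sq_pos: "0 \<le> inner (Sq x) x"
proof -
  have "(\<Sum>k. gco k * (norm x)\<^sup>2) \<le> (\<Sum>k. gco k * inner ((B ^^ k) x) x)"
  proof (rule suminf_le)
    fix k
    show "gco k * (norm x)\<^sup>2 \<le> gco k * inner ((B ^^ k) x) x"
    proof (cases "k = 0")
      case True thus ?thesis by (simp add: power2_norm_eq_inner)
    next
      case False
      have "inner ((B ^^ k) x) x \<le> norm ((B ^^ k) x) * norm x" by (rule norm_cauchy_schwarz)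
      also have "\<dots> \<le> norm x * norm x" using funpow_norm_le[of B, OF contr] by (intro mult_right_mono) auto
      finally have "inner ((B ^^ k) x) x \<le> (norm x)\<^sup>2" by (simp add: power2_eq_square)
      moreover have "gco k \<le> 0" using False gco_nonpos by simp
      ultimately show ?thesis by (rule mult_left_mono_neg)
    qed
  qed (use summ_inner summable_mult2[OF gco_summable] in auto)
  moreover have "(\<Sum>k. gco k * (norm x)\<^sup>2) = suminf gco * (norm x)\<^sup>2"
    using suminf_mult2[OF gco_summable] by simp
  moreover have "0 \<le> suminf gco * (norm x)\<^sup>2" using gco_suminf_nonneg by simp
  ultimately show ?thesis using inner_Sq[of x x] by linarith
qed

lemma Sq_Sq: "Sq (Sq x) = x - B x"
proof -
  have "inner (Sq (Sq x)) y = inner (x - B x) y" for y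
  proof -
    have "inner (Sq (Sq x)) y = inner (Sq x) (Sq y)" by (rule Sq_sym)
    also have "\<dots> = (\<Sum>k. \<Sum>i\<le>k. inner (gco i *\<^sub>R (B ^^ i) x) (gco (k - i) *\<^sub>R (B ^^ (k - i)) y))"
      unfolding Sq_def by (rule sums_unique[OF Cauchy_product_sums_inner[OF norm_summ norm_summ]])
    also have "\<dots> = (\<Sum>k. (if k = 0 then 1 else if k = 1 then -1 else 0) * inner ((B ^^ k) x) y)"
    proof (intro suminf_cong)
      fix k
      have "(\<Sum>i\<le>k. inner (gco i *\<^sub>R (B ^^ i) x) (gco (k - i) *\<^sub>R (B ^^ (k - i)) y))
          = (\<Sum>i\<le>k. (gco i * gco (k - i)) * inner ((B ^^ k) x) y)"
      proof (intro sum.cong refl)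
        fix i assume "i \<in> {..k}"
        hence ik: "k - i + i = k" by simp
        have "inner ((B ^^ i) x) ((B ^^ (k - i)) y) = inner ((B ^^ (k - i)) ((B ^^ i) x)) y"
          using funpow_sym[of B, OF sym] by simp
        also have "(B ^^ (k - i)) ((B ^^ i) x) = (B ^^ (k - i + i)) x" by (simp add: funpow_add)
        finally show "inner (gco i *\<^sub>R (B ^^ i) x) (gco (k - i) *\<^sub>R (B ^^ (k - i)) y)
            = (gco i * gco (k - i)) * inner ((B ^^ k) x) y" using ik by simp
      qed
      also have "\<dots> = (\<Sum>i\<le>k. gco i * gco (k - i)) * inner ((B ^^ k) x) y"
        by (simp add: sum_distrib_right)
      finally show "(\<Sum>i\<le>k. inner (gco i *\<^sub>R (B ^^ i) x) (gco (k - i) *\<^sub>R (B ^^ (k - i)) y))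
          = (if k = 0 then 1 else if k = 1 then -1 else 0) * inner ((B ^^ k) x) y"
        by (simp only: gco_cauchy)
    qed
    also have "\<dots> = (\<Sum>k\<in>{0,1}. (if k = 0 then 1 else if k = 1 then -1 else 0) * inner ((B ^^ k) x) y)"
      by (rule sums_unique[symmetric], rule sums_finite) auto
    also have "\<dots> = inner (x - B x) y" by (simp add: inner_diff_left)
    finally show ?thesis .
  qed
  thus ?thesis using vector_eq_rdot by blast
qed

lemma Sq_commute:
  assumes R: "bounded_linear R" and c: "\<And>x. R (B x) = B (R x)"
  shows "R (Sq x) = Sq (R x)"
proof -
  interpret r: bounded_linear R by fact
  have "R (Sq x) = (\<Sum>k. R (gco k *\<^sub>R (B ^^ k) x))"
    unfolding Sq_def by (rule r.suminf[OF summ])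
  also have "\<dots> = (\<Sum>k. gco k *\<^sub>R (B ^^ k) (R x))"
    using funpow_commute[of R B, OF c] by (simp add: r.scale)
  finally show ?thesis unfolding Sq_def .
qed

end



lemma pos_sqrt_ex1:
  fixes A :: "'h::{real_inner,complete_space} \<Rightarrow> 'h"
  assumes A: "positive_op A"
  shows "\<exists>!S. positive_op S \<and> S \<circ> S = A"
proof -
  have blA: "bounded_linear A" and symA: "\<And>x y. inner (A x) y = inner x (A y)"
    and posA: "\<And>x. 0 \<le> inner (A x) x" using A unfolding positive_op_def by auto
  interpret a: bounded_linear A by fact
  define a where "a = onorm A + 1"
  have a0: "0 < a" unfolding a_def using onorm_pos_le[OF blA] by simp
  define B where "B x = x - (1/a) *\<^sub>R A x" for x
  have blB: "bounded_linear B" unfolding B_def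
    by (intro bounded_linear_sub bounded_linear_ident bounded_linear_const_scaleR blA)
  have symB: "inner (B x) y = inner x (B y)" for x y
    unfolding B_def by (simp add: inner_diff_left inner_diff_right symA)
  have Ale: "inner (A x) x \<le> a * (norm x)\<^sup>2" for x
  proof -
    have "inner (A x) x \<le> norm (A x) * norm x" by (rule norm_cauchy_schwarz)
    also have "\<dots> \<le> onorm A * norm x * norm x" by (intro mult_right_mono onorm[OF blA]) auto
    also have "\<dots> \<le> a * norm x * norm x" unfolding a_def by (intro mult_right_mono) auto
    finally show ?thesis by (simp add: power2_eq_square mult.assoc)
  qed
  have innB: "inner (B x) x = (norm x)\<^sup>2 - inner (A x) x / a" for x
    unfolding B_def by (simp add: inner_diff_left power2_norm_eq_inner)
  have posB: "0 \<le> inner (B x) x" for x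
  proof -
    have "inner (A x) x / a \<le> (norm x)\<^sup>2" using Ale[of x] a0 by (simp add: divide_le_eq mult.commute)
    thus ?thesis using innB by simp
  qed
  have Ble: "inner (B x) x \<le> (norm x)\<^sup>2" for x
    using innB[of x] posA[of x] a0 by simp
  have pB: "positive_op B" unfolding positive_op_def using blB symB posB by blast
  have contr: "norm (B x) \<le> norm x" for x
  proof (cases "B x = 0")
    case True thus ?thesis by simp
  next
    case False
    have "(inner (B x) (B x))\<^sup>2 \<le> inner (B x) x * inner (B (B x)) (B x)" by (rule pos_cs[OF pB])
    also have "\<dots> \<le> (norm x)\<^sup>2 * (norm (B x))\<^sup>2"
      by (intro mult_mono Ble posB) auto
    also have "inner (B x) (B x) = (norm (B x))\<^sup>2" by (simp add: power2_norm_eq_inner)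
    finally have u: "((norm (B x))\<^sup>2)\<^sup>2 \<le> (norm x)\<^sup>2 * (norm (B x))\<^sup>2" .
    have upos: "0 < (norm (B x))\<^sup>2" using False by simp
    have "(norm (B x))\<^sup>2 * (norm (B x))\<^sup>2 \<le> (norm x)\<^sup>2 * (norm (B x))\<^sup>2"
      using u by (simp only: power2_eq_square[of "(norm (B x))\<^sup>2"])
    hence "(norm (B x))\<^sup>2 \<le> (norm x)\<^sup>2" using upos by (simp only: mult_le_cancel_right_pos)
    thus ?thesis by (simp add: power2_le_iff_abs_le)
  qed
  interpret s: sqB B by (rule sqB.intro[OF blB symB contr])
  define P where "P x = sqrt a *\<^sub>R s.Sq x" for x
  have blP: "bounded_linear P" unfolding P_def by (intro bounded_linear_const_scaleR s.Sq_bl)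
  have pP: "positive_op P"
    unfolding positive_op_def
  proof (intro conjI allI blP)
    fix x y show "inner (P x) y = inner x (P y)" unfolding P_def by (simp add: s.Sq_sym)
  next
    fix x show "0 \<le> inner (P x) x" unfolding P_def using s.Sq_pos[of x] a0 by simp
  qed
  have PP: "P (P x) = A x" for x
  proof -
    interpret sq: bounded_linear s.Sq by (rule s.Sq_bl)
    have "P (P x) = (sqrt a * sqrt a) *\<^sub>R s.Sq (s.Sq x)" unfolding P_def by (simp add: sq.scale)
    also have "sqrt a * sqrt a = a" using a0 by simp
    also have "s.Sq (s.Sq x) = (1/a) *\<^sub>R A x" by (simp add: s.Sq_Sq B_def)
    finally show ?thesis using a0 by simp
  qed
  show ?thesis
  proof (rule ex1I[of _ P])
    show "positive_op P \<and> P \<circ> P = A" using pP PP by auto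
  next
    fix R assume R: "positive_op R \<and> R \<circ> R = A"
    have blR: "bounded_linear R" and RR: "\<And>x. R (R x) = A x" using R unfolding positive_op_def
      by (auto simp: fun_eq_iff)
    interpret r: bounded_linear R by fact
    have RA: "R (A x) = A (R x)" for x using RR by metis
    have RB: "R (B x) = B (R x)" for x unfolding B_def by (simp add: r.diff r.scale RA)
    have "R (P x) = P (R x)" for x unfolding P_def
      using s.Sq_commute[OF blR RB] by (simp add: r.scale)
    hence "P = R" using pos_unique_commuting[OF pP R[THEN conjunct1]] PP RR by metis
    thus "R = P" by simp
  qed
qed

lemma op_sqrt:
  fixes A :: "'h::{real_inner,complete_space} \<Rightarrow> 'h"
  assumes A: "positive_op A"
  shows "positive_op (op_sqrt A)" "\<And>x. op_sqrt A (op_sqrt A x) = A x"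
proof -
  have "positive_op (op_sqrt A) \<and> op_sqrt A \<circ> op_sqrt A = A"
    unfolding op_sqrt_def by (rule theI'[OF pos_sqrt_ex1[OF A]])
  thus "positive_op (op_sqrt A)" "\<And>x. op_sqrt A (op_sqrt A x) = A x"
    by (auto simp: fun_eq_iff)
qed



lemma ratio_dec:
  fixes t :: "nat \<Rightarrow> ennreal" and r :: real
  assumes r: "0 \<le> r" and step: "\<And>j. t (Suc j) \<le> ennreal r * t j"
  defines "X \<equiv> \<lambda>k. (\<Sum>j\<le>k. t j) / ennreal (\<Sum>j\<le>k. r ^ j)"
  shows "(\<exists>L. X \<longlonglongrightarrow> L) \<and> (lim X < \<infinity> \<longleftrightarrow> t 0 < \<infinity>)"
proof -
  define N where "N k = (\<Sum>j\<le>k. t j)" for k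
  define R where "R k = (\<Sum>j\<le>k. r ^ j)" for k
  have XNR: "X k = N k / ennreal (R k)" for k unfolding X_def N_def R_def by simp
  have R1: "1 \<le> R k" for k
  proof -
    have "(\<Sum>j\<in>{0}. r ^ j) \<le> R k" unfolding R_def
      by (rule sum_mono2) (use r in auto)
    thus ?thesis by simp
  qed
  have Rpos: "0 < ennreal (R k)" "ennreal (R k) \<noteq> 0" "ennreal (R k) \<noteq> top" for k
    using R1[of k] by auto
  have pw: "t m \<le> ennreal (r ^ (m - j)) * t j" if "j \<le> m" for j m
    using that
  proof (induction m rule: dec_induct)
    case base thus ?case by simp
  next
    case (step m)
    have "t (Suc m) \<le> ennreal r * t m" by (rule assms(2))
    also have "\<dots> \<le> ennreal r * (ennreal (r ^ (m - j)) * t j)" by (intro mult_left_mono step.IH) auto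
    also have "\<dots> = ennreal (r ^ (Suc m - j)) * t j"
    proof -
      have "ennreal r * ennreal (r ^ (m - j)) = ennreal (r * r ^ (m - j))"
        using r by (simp add: ennreal_mult)
      also have "r * r ^ (m - j) = r ^ (Suc m - j)" using step.hyps by (simp add: Suc_diff_le)
      finally show ?thesis by (simp only: mult.assoc[symmetric])
    qed
    finally show ?case .
  qed
  have key: "t (Suc k) * ennreal (R k) \<le> ennreal (r ^ Suc k) * N k" for k
  proof -
    have se: "(\<Sum>j\<le>k. ennreal (r ^ j)) = ennreal (R k)"
      unfolding R_def using r by (intro sum_ennreal) simp
    have "t (Suc k) * ennreal (R k) = (\<Sum>j\<le>k. t (Suc k) * ennreal (r ^ j))"
      unfolding se[symmetric] by (rule sum_distrib_left)
    also have "\<dots> \<le> (\<Sum>j\<le>k. ennreal (r ^ Suc k) * t j)"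
    proof (rule sum_mono)
      fix j assume "j \<in> {..k}"
      hence "t (Suc k) \<le> ennreal (r ^ (Suc k - j)) * t j" by (intro pw) auto
      hence "t (Suc k) * ennreal (r ^ j) \<le> ennreal (r ^ (Suc k - j)) * t j * ennreal (r ^ j)"
        by (rule mult_right_mono) simp
      also have "\<dots> = ennreal (r ^ Suc k) * t j"
      proof -
        have "ennreal (r ^ (Suc k - j)) * ennreal (r ^ j) = ennreal (r ^ (Suc k - j) * r ^ j)"
          using r by (simp add: ennreal_mult)
        also have "r ^ (Suc k - j) * r ^ j = r ^ Suc k"
          using \<open>j \<in> {..k}\<close> by (simp add: power_add[symmetric])
        finally have "ennreal (r ^ (Suc k - j)) * ennreal (r ^ j) = ennreal (r ^ Suc k)" .
        thus ?thesis by (metis mult.assoc mult.commute)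
      qed
      finally show "t (Suc k) * ennreal (r ^ j) \<le> ennreal (r ^ Suc k) * t j" .
    qed
    also have "\<dots> = ennreal (r ^ Suc k) * N k" unfolding N_def by (simp add: sum_distrib_left)
    finally show ?thesis .
  qed
  have dec: "X (Suc k) \<le> X k" for k
  proof -
    have RS: "ennreal (R (Suc k)) = ennreal (R k) + ennreal (r ^ Suc k)"
    proof -
      have "R (Suc k) = R k + r ^ Suc k" unfolding R_def by simp
      moreover have "0 \<le> R k" using R1[of k] by simp
      ultimately show ?thesis using r by (simp add: ennreal_plus)
    qed
    have "N (Suc k) * ennreal (R k) = N k * ennreal (R k) + t (Suc k) * ennreal (R k)"
      unfolding N_def by (simp add: distrib_right)
    also have "\<dots> \<le> N k * ennreal (R k) + ennreal (r ^ Suc k) * N k"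
      by (intro add_left_mono key)
    also have "\<dots> = ennreal (R (Suc k)) * N k" unfolding RS by (simp add: distrib_left mult.commute)
    finally have ineq: "N (Suc k) * ennreal (R k) \<le> ennreal (R (Suc k)) * N k" .
    have "N (Suc k) = N (Suc k) * ennreal (R k) / ennreal (R k)"
      using Rpos(2,3)[of k] by (simp add: ennreal_mult_divide_eq)
    also have "\<dots> \<le> ennreal (R (Suc k)) * N k / ennreal (R k)"
      by (rule divide_right_mono_ennreal[OF ineq])
    also have "\<dots> = ennreal (R (Suc k)) * (N k / ennreal (R k))" by (simp add: ennreal_times_divide)
    finally have "N (Suc k) \<le> ennreal (R (Suc k)) * (N k / ennreal (R k))" .
    hence "N (Suc k) / ennreal (R (Suc k)) \<le> N k / ennreal (R k)"
      by (rule divide_le_posI_ennreal[OF Rpos(1)])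
    thus ?thesis unfolding XNR .
  qed
  have decs: "decseq X" by (rule decseq_SucI) (rule dec)
  have lim: "X \<longlonglongrightarrow> (INF k. X k)" by (rule LIMSEQ_INF[OF decs])
  have limX: "lim X = (INF k. X k)" by (rule limI[OF lim])
  have "lim X < \<infinity> \<longleftrightarrow> t 0 < \<infinity>"
  proof (cases "t 0 = \<infinity>")
    case True
    have "N k = top" for k
    proof -
      have "t 0 \<le> N k" unfolding N_def by (rule member_le_sum) auto
      thus ?thesis using True by (simp add: top_unique)
    qed
    hence "X k = top" for k unfolding XNR using Rpos(3)[of k] by (simp add: ennreal_top_divide)
    hence "lim X = top" unfolding limX by simp
    thus ?thesis using True by simp
  next
    case False
    have "lim X \<le> X 0" unfolding limX by (rule INF_lower) simp
    also have "X 0 = t 0" unfolding XNR N_def R_def by (simp add: divide_ennreal_def)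
    finally have "lim X \<le> t 0" .
    thus ?thesis using False by (metis infinity_ennreal_def less_top order.not_eq_order_implies_strict top.not_eq_extremum order_le_less_trans)
  qed
  thus ?thesis using lim by blast
qed



lemma infsum_cmult_le_enn:
  fixes f :: "'a \<Rightarrow> ennreal"
  shows "(\<Sum>\<^sub>\<infinity>x\<in>A. c * f x) \<le> c * (\<Sum>\<^sub>\<infinity>x\<in>A. f x)"
proof (rule infsum_le_finite_sums)
  fix F assume F: "finite F" "F \<subseteq> A"
  have "(\<Sum>x\<in>F. c * f x) = c * (\<Sum>x\<in>F. f x)" by (simp add: sum_distrib_left)
  also have "\<dots> \<le> c * (\<Sum>\<^sub>\<infinity>x\<in>A. f x)" by (intro mult_left_mono finite_sum_le_infsum_enn F) simp
  finally show "(\<Sum>x\<in>F. c * f x) \<le> c * (\<Sum>\<^sub>\<infinity>x\<in>A. f x)" .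
qed simp

lemma T_word_Nil: "T_word T [] = id" by (simp add: T_word_def)
lemma T_word_Cons: "T_word T (i # \<alpha>) = T i \<circ> T_word T \<alpha>" by (simp add: T_word_def)
lemma words_Nil: "[] \<in> words n" by (simp add: words_def)
lemma words_Cons: "(i # \<alpha> \<in> words n) \<longleftrightarrow> i < n \<and> \<alpha> \<in> words n" by (auto simp: words_def)

locale setting =
  fixes T :: "nat \<Rightarrow> 'h::{real_inner,complete_space} \<Rightarrow> 'h" and D :: "'h \<Rightarrow> 'h" and n :: nat
  assumes blT: "\<And>i. i < n \<Longrightarrow> bounded_linear (T i)"
    and posD: "positive_op D"
    and le: "\<forall>x. inner (phi T n D x) x \<le> inner (D x) x"
begin

definition S where "S = op_sqrt (D - phi T n D)"
definition Adj where "Adj \<alpha> = adjoint (T_word T \<alpha>)"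
definition h where "h \<alpha> = (\<Sum>\<^sub>\<infinity>e\<in>some_onb. ennreal ((norm (S (Adj \<alpha> e)))\<^sup>2))"
definition r where "r = onorm (phi_star T n id)"
definition Lw where "Lw j = {\<alpha>\<in>words n. length \<alpha> = j}"
definition W where "W k = {\<alpha>\<in>words n. length \<alpha> \<le> k}"
definition t where "t j = (\<Sum>\<alpha>\<in>Lw j. h \<alpha>)"

lemma adjT: "i < n \<Longrightarrow> inner (T i x) y = inner x (adjoint (T i) y)"
  by (rule adjoint_works_gen[OF blT])

lemma adjT': "i < n \<Longrightarrow> inner (adjoint (T i) x) y = inner x (T i y)"
  using adjT by (metis inner_commute)

lemma blAT: "i < n \<Longrightarrow> bounded_linear (adjoint (T i))"
  by (rule adjoint_bl[OF blT])

lemma blTw: "\<alpha> \<in> words n \<Longrightarrow> bounded_linear (T_word T \<alpha>)"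
proof (induction \<alpha>)
  case Nil thus ?case by (simp add: T_word_Nil id_def bounded_linear_ident)
next
  case (Cons i \<alpha>)
  hence "i < n" "\<alpha> \<in> words n" by (auto simp: words_Cons)
  thus ?case using Cons.IH blT unfolding T_word_Cons by (simp add: bounded_linear_compose o_def)
qed

lemma adjW: "\<alpha> \<in> words n \<Longrightarrow> inner (T_word T \<alpha> x) y = inner x (Adj \<alpha> y)"
  unfolding Adj_def by (rule adjoint_works_gen[OF blTw])

lemma blAdj: "\<alpha> \<in> words n \<Longrightarrow> bounded_linear (Adj \<alpha>)"
  unfolding Adj_def by (rule adjoint_bl[OF blTw])

lemma Adj_Nil: "Adj [] = id"
  unfolding Adj_def T_word_Nil by (rule adjoint_eqI) simp

lemma Adj_Cons:
  assumes "i < n" "\<alpha> \<in> words n"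
  shows "Adj (i # \<alpha>) = (\<lambda>x. Adj \<alpha> (adjoint (T i) x))"
  unfolding Adj_def
proof (rule adjoint_eqI)
  fix x y
  have "inner (T_word T (i # \<alpha>) x) y = inner (T i (T_word T \<alpha> x)) y" by (simp add: T_word_Cons)
  also have "\<dots> = inner (T_word T \<alpha> x) (adjoint (T i) y)" by (rule adjT[OF assms(1)])
  also have "\<dots> = inner x (Adj \<alpha> (adjoint (T i) y))" by (rule adjW[OF assms(2)])
  finally show "inner (T_word T (i # \<alpha>) x) y = inner x (adjoint (T_word T \<alpha>) (adjoint (T i) y))"
    unfolding Adj_def .
qed

lemma blD: "bounded_linear D" using posD unfolding positive_op_def by auto
lemma symD: "inner (D x) y = inner x (D y)" using posD unfolding positive_op_def by auto

lemma bl_phi: "bounded_linear (phi T n D)"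
  unfolding phi_def
proof (rule bounded_linear_sum)
  fix i assume "i \<in> {..<n}"
  hence i: "i < n" by simp
  show "bounded_linear (\<lambda>x. T i (D (adjoint (T i) x)))"
    by (intro bounded_linear_compose[OF blT[OF i]] bounded_linear_compose[OF blD] blAT[OF i])
qed

lemma sym_phi: "inner (phi T n D x) y = inner x (phi T n D y)"
proof -
  have "inner (phi T n D x) y = (\<Sum>i<n. inner (T i (D (adjoint (T i) x))) y)"
    unfolding phi_def by (simp add: inner_sum_left)
  also have "\<dots> = (\<Sum>i<n. inner x (T i (D (adjoint (T i) y))))"
  proof (rule sum.cong[OF refl])
    fix i assume "i \<in> {..<n}"
    hence i: "i < n" by simp
    have "inner (T i (D (adjoint (T i) x))) y = inner (D (adjoint (T i) x)) (adjoint (T i) y)"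
      by (rule adjT[OF i])
    also have "\<dots> = inner (adjoint (T i) x) (D (adjoint (T i) y))" by (rule symD)
    also have "\<dots> = inner x (T i (D (adjoint (T i) y)))" by (rule adjT'[OF i])
    finally show "inner (T i (D (adjoint (T i) x))) y = inner x (T i (D (adjoint (T i) y)))" .
  qed
  also have "\<dots> = inner x (phi T n D y)" unfolding phi_def by (simp add: inner_sum_right)
  finally show ?thesis .
qed

lemma pos_Dl: "positive_op (D - phi T n D)"
  unfolding positive_op_def
proof (intro conjI allI)
  show "bounded_linear (D - phi T n D)"
    unfolding fun_diff_def by (intro bounded_linear_sub blD bl_phi)
next
  fix x y show "inner ((D - phi T n D) x) y = inner x ((D - phi T n D) y)"
    by (simp add: inner_diff_left inner_diff_right symD sym_phi)
next
  fix x show "0 \<le> inner ((D - phi T n D) x) x"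
    using le by (simp add: inner_diff_left)
qed

lemma posS: "positive_op S" unfolding S_def by (rule op_sqrt(1)[OF pos_Dl])
lemma SS: "S (S x) = (D - phi T n D) x" unfolding S_def by (rule op_sqrt(2)[OF pos_Dl])
lemma blS: "bounded_linear S" using posS unfolding positive_op_def by auto

lemma normS: "(norm (S v))\<^sup>2 = inner ((D - phi T n D) v) v"
proof -
  have "(norm (S v))\<^sup>2 = inner (S v) (S v)" by (simp add: power2_norm_eq_inner)
  also have "\<dots> = inner (S (S v)) v" using posS unfolding positive_op_def by auto
  finally show ?thesis by (simp add: SS)
qed

lemma h_Nil: "h [] = pos_trace (D - phi T n D)"
  unfolding h_def pos_trace_def Adj_Nil by (simp add: normS)

lemma t0: "t 0 = pos_trace (D - phi T n D)"
proof -
  have "Lw 0 = {[]}" unfolding Lw_def using words_Nil by auto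
  thus ?thesis unfolding t_def by (simp add: h_Nil)
qed

lemma bl_phistar: "bounded_linear (phi_star T n id)"
  unfolding phi_star_def
proof (rule bounded_linear_sum)
  fix i assume "i \<in> {..<n}"
  hence i: "i < n" by simp
  show "bounded_linear (\<lambda>x. adjoint (T i) (id (T i x)))"
    using bounded_linear_compose[OF blAT[OF i] blT[OF i]] by (simp add: o_def)
qed

lemma r_nonneg: "0 \<le> r" unfolding r_def by (rule onorm_pos_le[OF bl_phistar])

lemma sum_T_norm: "(\<Sum>i<n. (norm (T i y))\<^sup>2) \<le> r * (norm y)\<^sup>2"
proof -
  have "(\<Sum>i<n. (norm (T i y))\<^sup>2) = (\<Sum>i<n. inner (adjoint (T i) (T i y)) y)"
    by (intro sum.cong refl) (simp add: adjT' power2_norm_eq_inner)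
  also have "\<dots> = inner (phi_star T n id y) y" unfolding phi_star_def by (simp add: inner_sum_left)
  also have "\<dots> \<le> norm (phi_star T n id y) * norm y" by (rule norm_cauchy_schwarz)
  also have "\<dots> \<le> r * norm y * norm y"
    unfolding r_def by (intro mult_right_mono onorm[OF bl_phistar]) auto
  finally show ?thesis by (simp add: power2_eq_square mult.assoc)
qed

lemma h_Cons_sum:
  assumes \<alpha>: "\<alpha> \<in> words n"
  shows "(\<Sum>i<n. h (i # \<alpha>)) \<le> ennreal r * h \<alpha>"
proof -
  define C where "C x = S (Adj \<alpha> x)" for x
  have blC: "bounded_linear C" unfolding C_def
    by (rule bounded_linear_compose[OF blS blAdj[OF \<alpha>]])
  define C' where "C' = adjoint C"
  have adjC: "inner (C x) y = inner x (C' y)" for x y unfolding C'_def by (rule adjoint_works_gen[OF blC])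
  have hi: "h (i # \<alpha>) = (\<Sum>\<^sub>\<infinity>f\<in>some_onb. ennreal ((norm (T i (C' f)))\<^sup>2))" if i: "i < n" for i
  proof -
    have "h (i # \<alpha>) = (\<Sum>\<^sub>\<infinity>e\<in>some_onb. ennreal ((norm (C (adjoint (T i) e)))\<^sup>2))"
      unfolding h_def Adj_Cons[OF i \<alpha>] C_def ..
    also have "\<dots> = (\<Sum>\<^sub>\<infinity>f\<in>some_onb. ennreal ((norm (T i (C' f)))\<^sup>2))"
    proof (rule hs_eq[OF some_onb])
      fix x y
      have "inner (C (adjoint (T i) x)) y = inner (adjoint (T i) x) (C' y)" by (rule adjC)
      also have "\<dots> = inner x (T i (C' y))" by (rule adjT'[OF i])
      finally show "inner (C (adjoint (T i) x)) y = inner x (T i (C' y))" .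
    qed
    finally show ?thesis .
  qed
  have "(\<Sum>i<n. h (i # \<alpha>)) = (\<Sum>i<n. \<Sum>\<^sub>\<infinity>f\<in>some_onb. ennreal ((norm (T i (C' f)))\<^sup>2))"
    by (intro sum.cong refl) (simp add: hi)
  also have "\<dots> = (\<Sum>\<^sub>\<infinity>f\<in>some_onb. \<Sum>i<n. ennreal ((norm (T i (C' f)))\<^sup>2))"
    by (rule infsum_sum_ennreal[symmetric]) simp
  also have "\<dots> \<le> (\<Sum>\<^sub>\<infinity>f\<in>some_onb. ennreal r * ennreal ((norm (C' f))\<^sup>2))"
  proof (rule infsum_mono)
    fix f
    have "(\<Sum>i<n. ennreal ((norm (T i (C' f)))\<^sup>2)) = ennreal (\<Sum>i<n. (norm (T i (C' f)))\<^sup>2)"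
      by (simp add: sum_ennreal)
    also have "\<dots> \<le> ennreal (r * (norm (C' f))\<^sup>2)" by (rule ennreal_leI[OF sum_T_norm])
    also have "\<dots> = ennreal r * ennreal ((norm (C' f))\<^sup>2)" using r_nonneg by (simp add: ennreal_mult)
    finally show "(\<Sum>i<n. ennreal ((norm (T i (C' f)))\<^sup>2)) \<le> ennreal r * ennreal ((norm (C' f))\<^sup>2)" .
  qed simp_all
  also have "\<dots> \<le> ennreal r * (\<Sum>\<^sub>\<infinity>f\<in>some_onb. ennreal ((norm (C' f))\<^sup>2))"
    by (rule infsum_cmult_le_enn)
  also have "(\<Sum>\<^sub>\<infinity>f\<in>some_onb. ennreal ((norm (C' f))\<^sup>2)) = h \<alpha>"
    unfolding h_def using hs_eq[OF some_onb adjC] by (simp add: C_def)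
  finally show ?thesis .
qed

lemma finite_W: "finite (W k)"
proof -
  have "W k \<subseteq> {xs. set xs \<subseteq> {..<n} \<and> length xs \<le> k}" unfolding W_def words_def by auto
  thus ?thesis using finite_lists_length_le[of "{..<n}" k] finite_subset by auto
qed

lemma finite_Lw: "finite (Lw j)"
proof -
  have "Lw j \<subseteq> W j" unfolding Lw_def W_def by auto
  thus ?thesis using finite_W finite_subset by blast
qed

lemma Lw_Suc: "Lw (Suc j) = (\<lambda>(i, \<alpha>). i # \<alpha>) ` ({..<n} \<times> Lw j)"
proof
  show "Lw (Suc j) \<subseteq> (\<lambda>(i, \<alpha>). i # \<alpha>) ` ({..<n} \<times> Lw j)"
  proof
    fix \<beta> assume "\<beta> \<in> Lw (Suc j)"
    then obtain i \<alpha> where "\<beta> = i # \<alpha>" "i < n" "\<alpha> \<in> words n" "length \<alpha> = j"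
      unfolding Lw_def by (cases \<beta>) (auto simp: words_Cons)
    thus "\<beta> \<in> (\<lambda>(i, \<alpha>). i # \<alpha>) ` ({..<n} \<times> Lw j)" unfolding Lw_def by force
  qed
  show "(\<lambda>(i, \<alpha>). i # \<alpha>) ` ({..<n} \<times> Lw j) \<subseteq> Lw (Suc j)"
    unfolding Lw_def by (auto simp: words_Cons)
qed

lemma t_step: "t (Suc j) \<le> ennreal r * t j"
proof -
  have inj: "inj_on (\<lambda>(i, \<alpha>). i # \<alpha>) ({..<n} \<times> Lw j)" by (auto simp: inj_on_def)
  have "t (Suc j) = (\<Sum>p\<in>{..<n} \<times> Lw j. h ((\<lambda>(i, \<alpha>). i # \<alpha>) p))"
    unfolding t_def Lw_Suc by (simp add: sum.reindex[OF inj] o_def)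
  also have "\<dots> = (\<Sum>(i, \<alpha>)\<in>{..<n} \<times> Lw j. h (i # \<alpha>))"
    by (intro sum.cong refl) auto
  also have "\<dots> = (\<Sum>i<n. \<Sum>\<alpha>\<in>Lw j. h (i # \<alpha>))"
    by (rule sum.cartesian_product[symmetric])
  also have "\<dots> = (\<Sum>\<alpha>\<in>Lw j. \<Sum>i<n. h (i # \<alpha>))" by (rule sum.swap)
  also have "\<dots> \<le> (\<Sum>\<alpha>\<in>Lw j. ennreal r * h \<alpha>)"
    by (intro sum_mono h_Cons_sum) (simp add: Lw_def)
  also have "\<dots> = ennreal r * t j" unfolding t_def by (simp add: sum_distrib_left)
  finally show ?thesis .
qed

lemma fock_eq:
  "fock_inner n (proj_le k (poisson_kernel T n D e)) (poisson_kernel T n D e)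
     = (\<Sum>\<alpha>\<in>W k. (norm (S (Adj \<alpha> e)))\<^sup>2)"
proof -
  have "fock_inner n (proj_le k (poisson_kernel T n D e)) (poisson_kernel T n D e)
      = (\<Sum>\<^sub>\<infinity>\<alpha>\<in>W k. (norm (S (Adj \<alpha> e)))\<^sup>2)"
    unfolding fock_inner_def
  proof (rule infsum_cong_neutral)
    fix \<alpha> assume "\<alpha> \<in> words n - W k"
    thus "inner (proj_le k (poisson_kernel T n D e) \<alpha>) (poisson_kernel T n D e \<alpha>) = 0"
      unfolding W_def proj_le_def by auto
  next
    fix \<alpha> assume "\<alpha> \<in> W k - words n"
    thus "(norm (S (Adj \<alpha> e)))\<^sup>2 = 0" unfolding W_def by auto
  next
    fix \<alpha> assume "\<alpha> \<in> words n \<inter> W k"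
    thus "inner (proj_le k (poisson_kernel T n D e) \<alpha>) (poisson_kernel T n D e \<alpha>) = (norm (S (Adj \<alpha> e)))\<^sup>2"
      unfolding W_def proj_le_def poisson_kernel_def S_def Adj_def by (simp add: power2_norm_eq_inner)
  qed
  also have "\<dots> = (\<Sum>\<alpha>\<in>W k. (norm (S (Adj \<alpha> e)))\<^sup>2)" using finite_W by simp
  finally show ?thesis .
qed

lemma W_sum: "(\<Sum>\<alpha>\<in>W k. h \<alpha>) = (\<Sum>j\<le>k. t j)"
proof (induction k)
  case 0
  have "W 0 = Lw 0" unfolding W_def Lw_def by auto
  thus ?case by (simp add: t_def)
next
  case (Suc k)
  have "W (Suc k) = W k \<union> Lw (Suc k)" unfolding W_def Lw_def by auto
  moreover have "W k \<inter> Lw (Suc k) = {}" unfolding W_def Lw_def by auto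
  ultimately have "(\<Sum>\<alpha>\<in>W (Suc k). h \<alpha>) = (\<Sum>\<alpha>\<in>W k. h \<alpha>) + (\<Sum>\<alpha>\<in>Lw (Suc k). h \<alpha>)"
    using finite_W finite_Lw by (simp add: sum.union_disjoint)
  thus ?case using Suc by (simp add: t_def)
qed

lemma curv_num_eq: "curv_num T n D k = (\<Sum>j\<le>k. t j)"
proof -
  have "curv_num T n D k = (\<Sum>\<^sub>\<infinity>e\<in>some_onb. \<Sum>\<alpha>\<in>W k. ennreal ((norm (S (Adj \<alpha> e)))\<^sup>2))"
    unfolding curv_num_def fock_eq by (simp add: sum_ennreal)
  also have "\<dots> = (\<Sum>\<alpha>\<in>W k. h \<alpha>)"
    unfolding h_def by (rule infsum_sum_ennreal[OF finite_W])
  also have "\<dots> = (\<Sum>j\<le>k. t j)" by (rule W_sum)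
  finally show ?thesis .
qed

lemma main:
  "(\<exists>L. curv_ratio T n D \<longlonglongrightarrow> L) \<and>
   (curv_star T n D < \<infinity> \<longleftrightarrow> pos_trace (D - phi T n D) < \<infinity>)"
proof -
  have eq: "curv_ratio T n D = (\<lambda>k. (\<Sum>j\<le>k. t j) / ennreal (\<Sum>j\<le>k. r ^ j))"
    unfolding curv_ratio_def curv_num_eq r_def ..
  show ?thesis
    unfolding curv_star_def eq t0[symmetric]
    by (rule ratio_dec[where t=t and r=r, OF r_nonneg t_step])
qed

end

theorem theorem6p1:
  fixes T :: "nat \<Rightarrow> 'h::{real_inner, complete_space} \<Rightarrow> 'h"
    and D :: "'h \<Rightarrow> 'h" and n :: nat
  assumes "\<And>i. i < n \<Longrightarrow> bounded_linear (T i)"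
    and "positive_op D"
    and "\<forall>x. inner (phi T n D x) x \<le> inner (D x) x"
  shows "(\<exists>L. curv_ratio T n D \<longlonglongrightarrow> L) \<and>
         (curv_star T n D < \<infinity> \<longleftrightarrow> pos_trace (D - phi T n D) < \<infinity>)"
proof -
  interpret setting T D n by (rule setting.intro[OF assms])
  show ?thesis by (rule main)
qed

end
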